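(* Let $A$ be a basic connected finite dimensional algebra over an algebraically closed field $k$ with ordinary quiver $Q$ without oriented cycles. Let $\nu\colon kQ\twoheadrightarrow A$ be a presentation with $I=\mathsf{Ker}(\nu)$, and let $\psi\colon kQ\xrightarrow{\sim}kQ$ be an automorphism with $\psi(e_i)=e_i$ for all $i$ and $\psi(I)=I$. Let $\mu:=\nu\circ\psi$ (so $\mathsf{Ker}(\mu)=I$), and let $\overline\psi\colon A\xrightarrow{\sim}A$ be the $k$-algebra automorphism with $\overline\psi\circ\mu=\mu\circ\psi$. Then $\theta_\mu=\overline\psi_*\circ\theta_\nu$. In particular $\mathsf{Im}(\theta_\mu)=\overline\psi_*(\mathsf{Im}(\theta_\nu))$.
   Context: Fix a complete set $e_1,\dots,e_n$ of primitive orthogonal idempotents of $A$ indexed by $Q_0=\{1,\dots,n\}$, $E=\bigoplus ke_i$. A presentation is a surjective algebra map $\nu\colon kQ\twoheadrightarrow A$ with admissible kernel ($(kQ^+)^N\subseteq\mathsf{Ker}\,\nu\subseteq(kQ^+)^2$ for some $N\ge2$, $kQ^+$ the arrow ideal) and $\nu(e_i)=e_i$. $\mathsf{HH}^1(A)=Der_0(A)/Int_0(A)$, with $Der_0(A)$ the Lie algebra (commutator) of derivations vanishing on all $e_i$ and $Int_0(A)=\{a\mapsto ea-ae\mid e\in E\}$. For an automorphism $\phi$ of $A$ fixing every $e_i$, $\phi_*$ is the Lie algebra automorphism of $\mathsf{HH}^1(A)$ induced by $d\mapsto\phi\circ d\circ\phi^{-1}$. Walks: paths with formal inverse arrows allowed.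 $\sim_I$ is the smallest equivalence relation on walks with $\alpha\alpha^{-1}\sim_I e_y$, $\alpha^{-1}\alpha\sim_I e_x$ for arrows $\alpha\colon x\to y$, compatible with concatenation, and identifying two paths occurring with nonzero coefficient in a same minimal relation of $I$ (a nonzero $\sum t_iu_i\in I$, $t_i\neq0$, distinct paths, no nonempty proper subsum in $I$). $\pi_1(Q,I)$ is the group of classes of closed walks at a fixed vertex $x_0$. Fix a maximal tree $T$ of $Q$, $\gamma_x$ the minimal walk in $T$ from $x_0$ to $x$. For a presentation $\nu$ with kernel $I$ and a group homomorphism $f\colon\pi_1(Q,I)\to k^+$, $\theta_\nu(f)$ is the class of the derivation $\tilde f$ with $\tilde f(\nu(u))=f([\gamma_y^{-1}u\gamma_x]_I)\nu(u)$ for paths $u$ from $x$ to $y$. *)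

theory Defs
  imports "Graph_Theory.Digraph" "HOL-Algebra.Group" "HOL-Computational_Algebra.Polynomial"
begin

definition alg_closed :: "'k::field itself \<Rightarrow> bool" where
  "alg_closed _ \<longleftrightarrow> (\<forall>p::'k poly. degree p > 0 \<longrightarrow> (\<exists>x. poly p x = 0))"

text \<open>A walk is a start vertex
  together with the list of its letters in the order of traversal; the letter
  (a, True) traverses the arrow a, the letter (a, False) its formal inverse.\<close>

type_synonym ('v,'e) walk = "'v \<times> ('e \<times> bool) list"
type_synonym ('v,'e) path = "'v \<times> 'e list"

definition lstart :: "('v,'e) pre_digraph \<Rightarrow> 'e \<times> bool \<Rightarrow> 'v" where
  "lstart G l = (if snd l then tail G (fst l) else head G (fst l))"

definition lend :: "('v,'e) pre_digraph \<Rightarrow> 'e \<times> bool \<Rightarrow> 'v" where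
  "lend G l = (if snd l then head G (fst l) else tail G (fst l))"

fun walk_ok :: "('v,'e) pre_digraph \<Rightarrow> 'v \<Rightarrow> ('e \<times> bool) list \<Rightarrow> bool" where
  "walk_ok G x [] \<longleftrightarrow> x \<in> verts G"
| "walk_ok G x (l # ls) \<longleftrightarrow> x \<in> verts G \<and> fst l \<in> arcs G \<and> lstart G l = x \<and> walk_ok G (lend G l) ls"

definition is_walk :: "('v,'e) pre_digraph \<Rightarrow> ('v,'e) walk \<Rightarrow> bool" where
  "is_walk G w \<longleftrightarrow> walk_ok G (fst w) (snd w)"

definition wend :: "('v,'e) pre_digraph \<Rightarrow> ('v,'e) walk \<Rightarrow> 'v" where
  "wend G w = (if snd w = [] then fst w else lend G (last (snd w)))"

text \<open>Concatenation written as composition: wcomp w2 w1 = w2 w1 traverses w1 first.\<close>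
definition wcomp :: "('v,'e) walk \<Rightarrow> ('v,'e) walk \<Rightarrow> ('v,'e) walk" where
  "wcomp w2 w1 = (fst w1, snd w1 @ snd w2)"

definition winv :: "('v,'e) pre_digraph \<Rightarrow> ('v,'e) walk \<Rightarrow> ('v,'e) walk" where
  "winv G w = (wend G w, rev (map (\<lambda>(a,b). (a, \<not> b)) (snd w)))"

definition path_walk :: "('v,'e) path \<Rightarrow> ('v,'e) walk" where
  "path_walk p = (fst p, map (\<lambda>a. (a, True)) (snd p))"

definition is_path :: "('v,'e) pre_digraph \<Rightarrow> ('v,'e) path \<Rightarrow> bool" where
  "is_path G p \<longleftrightarrow> is_walk G (path_walk p)"

definition pend :: "('v,'e) pre_digraph \<Rightarrow> ('v,'e) path \<Rightarrow> 'v" where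
  "pend G p = wend G (path_walk p)"

definition quiver_connected :: "('v,'e) pre_digraph \<Rightarrow> bool" where
  "quiver_connected G \<longleftrightarrow> verts G \<noteq> {} \<and>
     (\<forall>x\<in>verts G. \<forall>y\<in>verts G. \<exists>w. is_walk G w \<and> fst w = x \<and> wend G w = y)"

definition no_oriented_cycles :: "('v,'e) pre_digraph \<Rightarrow> bool" where
  "no_oriented_cycles G \<longleftrightarrow> \<not> (\<exists>p. is_path G p \<and> snd p \<noteq> [] \<and> pend G p = fst p)"

definition walk_in :: "'e set \<Rightarrow> ('v,'e) walk \<Rightarrow> bool" where
  "walk_in T w \<longleftrightarrow> fst ` set (snd w) \<subseteq> T"

definition reduced_walk :: "('v,'e) walk \<Rightarrow> bool" where
  "reduced_walk w \<longleftrightarrow> (\<forall>i. Suc i < length (snd w) \<longrightarrow>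
      \<not> (fst (snd w ! i) = fst (snd w ! Suc i) \<and> snd (snd w ! i) \<noteq> snd (snd w ! Suc i)))"

definition forest :: "('v,'e) pre_digraph \<Rightarrow> 'e set \<Rightarrow> bool" where
  "forest G T \<longleftrightarrow> T \<subseteq> arcs G \<and>
     \<not> (\<exists>w. is_walk G w \<and> walk_in T w \<and> snd w \<noteq> [] \<and> wend G w = fst w \<and> reduced_walk w)"

definition maximal_tree :: "('v,'e) pre_digraph \<Rightarrow> 'e set \<Rightarrow> bool" where
  "maximal_tree G T \<longleftrightarrow> forest G T \<and> (\<forall>a\<in>arcs G - T. \<not> forest G (insert a T))"

definition tree_walk :: "('v,'e) pre_digraph \<Rightarrow> 'e set \<Rightarrow> 'v \<Rightarrow> 'v \<Rightarrow> ('v,'e) walk" where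
  "tree_walk G T x0 x = (SOME w. is_walk G w \<and> walk_in T w \<and> fst w = x0 \<and> wend G w = x \<and>
      (\<forall>w'. is_walk G w' \<and> walk_in T w' \<and> fst w' = x0 \<and> wend G w' = x \<longrightarrow>
             length (snd w) \<le> length (snd w')))"

text \<open>Elements of kQ are functions from paths to k supported on (valid) paths.
  The product is u v = u \<circ> v (v traversed first) for composable paths.\<close>

definition kQ :: "('v,'e) pre_digraph \<Rightarrow> (('v,'e) path \<Rightarrow> 'k::field) set" where
  "kQ G = {c. \<forall>p. c p \<noteq> 0 \<longrightarrow> is_path G p}"

definition pbasis :: "('v,'e) path \<Rightarrow> ('v,'e) path \<Rightarrow> 'k::field" where
  "pbasis p = (\<lambda>q. if q = p then 1 else 0)"

definition kQ_mult :: "('v,'e) pre_digraph \<Rightarrow> (('v,'e) path \<Rightarrow> 'k::field)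
     \<Rightarrow> (('v,'e) path \<Rightarrow> 'k) \<Rightarrow> (('v,'e) path \<Rightarrow> 'k)" where
  "kQ_mult G c d = (\<lambda>p. \<Sum>j\<le>length (snd p).
       c (pend G (fst p, take j (snd p)), drop j (snd p)) * d (fst p, take j (snd p)))"

definition kQ_one :: "('v,'e) pre_digraph \<Rightarrow> ('v,'e) path \<Rightarrow> 'k::field" where
  "kQ_one G = (\<lambda>p. if fst p \<in> verts G \<and> snd p = [] then 1 else 0)"

definition kQ_smult :: "'k::field \<Rightarrow> (('v,'e) path \<Rightarrow> 'k) \<Rightarrow> (('v,'e) path \<Rightarrow> 'k)" where
  "kQ_smult a c = (\<lambda>p. a * c p)"

definition arrow_ideal_pow :: "('v,'e) pre_digraph \<Rightarrow> nat \<Rightarrow> (('v,'e) path \<Rightarrow> 'k::field) set" where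
  "arrow_ideal_pow G m = {c \<in> kQ G. \<forall>p. c p \<noteq> 0 \<longrightarrow> length (snd p) \<ge> m}"

definition admissible :: "('v,'e) pre_digraph \<Rightarrow> (('v,'e) path \<Rightarrow> 'k::field) set \<Rightarrow> bool" where
  "admissible G I \<longleftrightarrow> (\<exists>N\<ge>2. arrow_ideal_pow G N \<subseteq> I \<and> I \<subseteq> arrow_ideal_pow G 2)"

definition k_algebra :: "('k::field \<Rightarrow> 'a::ring_1 \<Rightarrow> 'a) \<Rightarrow> bool" where
  "k_algebra scale \<longleftrightarrow>
     (\<forall>a x y. scale a (x + y) = scale a x + scale a y) \<and>
     (\<forall>a b x. scale (a + b) x = scale a x + scale b x) \<and>
     (\<forall>a b x. scale (a * b) x = scale a (scale b x)) \<and>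
     (\<forall>x. scale 1 x = x) \<and>
     (\<forall>a x y. scale a (x * y) = scale a x * y \<and> scale a (x * y) = x * scale a y)"

definition idempotent :: "'a::ring_1 \<Rightarrow> bool" where
  "idempotent e \<longleftrightarrow> e * e = e"

definition primitive_idempotent :: "'a::ring_1 \<Rightarrow> bool" where
  "primitive_idempotent e \<longleftrightarrow> idempotent e \<and> e \<noteq> 0 \<and>
     \<not> (\<exists>e1 e2. idempotent e1 \<and> idempotent e2 \<and> e1 \<noteq> 0 \<and> e2 \<noteq> 0 \<and>
          e1 * e2 = 0 \<and> e2 * e1 = 0 \<and> e = e1 + e2)"

definition complete_idempotents :: "('v,'e) pre_digraph \<Rightarrow> ('v \<Rightarrow> 'a::ring_1) \<Rightarrow> bool" where
  "complete_idempotents G eA \<longleftrightarrow>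
     (\<forall>i\<in>verts G. primitive_idempotent (eA i)) \<and>
     (\<forall>i\<in>verts G. \<forall>j\<in>verts G. i \<noteq> j \<longrightarrow> eA i * eA j = 0) \<and>
     (\<Sum>i\<in>verts G. eA i) = 1"

definition kQ_alg_hom :: "('v,'e) pre_digraph \<Rightarrow> ('k::field \<Rightarrow> 'a::ring_1 \<Rightarrow> 'a)
     \<Rightarrow> ((('v,'e) path \<Rightarrow> 'k) \<Rightarrow> 'a) \<Rightarrow> bool" where
  "kQ_alg_hom G scale \<nu> \<longleftrightarrow>
     (\<forall>c\<in>kQ G. \<forall>d\<in>kQ G. \<nu> (\<lambda>p. c p + d p) = \<nu> c + \<nu> d \<and> \<nu> (kQ_mult G c d) = \<nu> c * \<nu> d) \<and>
     (\<forall>a. \<forall>c\<in>kQ G. \<nu> (kQ_smult a c) = scale a (\<nu> c)) \<and>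
     \<nu> (kQ_one G) = 1"

definition kernel :: "('v,'e) pre_digraph \<Rightarrow> ((('v,'e) path \<Rightarrow> 'k::field) \<Rightarrow> 'a::ring_1)
     \<Rightarrow> (('v,'e) path \<Rightarrow> 'k) set" where
  "kernel G \<nu> = {c \<in> kQ G. \<nu> c = 0}"

definition presentation :: "('v,'e) pre_digraph \<Rightarrow> ('k::field \<Rightarrow> 'a::ring_1 \<Rightarrow> 'a)
     \<Rightarrow> ('v \<Rightarrow> 'a) \<Rightarrow> ((('v,'e) path \<Rightarrow> 'k) \<Rightarrow> 'a) \<Rightarrow> bool" where
  "presentation G scale eA \<nu> \<longleftrightarrow>
     kQ_alg_hom G scale \<nu> \<and> \<nu> ` kQ G = UNIV \<and> admissible G (kernel G \<nu>) \<and>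
     (\<forall>i\<in>verts G. \<nu> (pbasis (i, [])) = eA i)"

definition kQ_alg_aut :: "('v,'e) pre_digraph
     \<Rightarrow> ((('v,'e) path \<Rightarrow> 'k::field) \<Rightarrow> (('v,'e) path \<Rightarrow> 'k)) \<Rightarrow> bool" where
  "kQ_alg_aut G \<psi> \<longleftrightarrow> bij_betw \<psi> (kQ G) (kQ G) \<and>
     (\<forall>c\<in>kQ G. \<forall>d\<in>kQ G. \<psi> (\<lambda>p. c p + d p) = (\<lambda>p. \<psi> c p + \<psi> d p) \<and> \<psi> (kQ_mult G c d) = kQ_mult G (\<psi> c) (\<psi> d)) \<and>
     (\<forall>a. \<forall>c\<in>kQ G. \<psi> (kQ_smult a c) = kQ_smult a (\<psi> c)) \<and>
     \<psi> (kQ_one G) = kQ_one G"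

definition alg_aut :: "('k::field \<Rightarrow> 'a::ring_1 \<Rightarrow> 'a) \<Rightarrow> ('a \<Rightarrow> 'a) \<Rightarrow> bool" where
  "alg_aut scale \<phi> \<longleftrightarrow> bij \<phi> \<and> (\<forall>x y. \<phi> (x + y) = \<phi> x + \<phi> y \<and> \<phi> (x * y) = \<phi> x * \<phi> y) \<and>
     (\<forall>a x. \<phi> (scale a x) = scale a (\<phi> x)) \<and> \<phi> 1 = 1"

definition k_linear :: "('k::field \<Rightarrow> 'a::ring_1 \<Rightarrow> 'a) \<Rightarrow> ('a \<Rightarrow> 'a) \<Rightarrow> bool" where
  "k_linear scale d \<longleftrightarrow> (\<forall>x y. d (x + y) = d x + d y) \<and> (\<forall>a x. d (scale a x) = scale a (d x))"

definition Der0 :: "('v,'e) pre_digraph \<Rightarrow> ('k::field \<Rightarrow> 'a::ring_1 \<Rightarrow> 'a) \<Rightarrow> ('v \<Rightarrow> 'a)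
     \<Rightarrow> ('a \<Rightarrow> 'a) set" where
  "Der0 G scale eA = {d. k_linear scale d \<and> (\<forall>x y. d (x * y) = d x * y + x * d y) \<and>
                        (\<forall>i\<in>verts G. d (eA i) = 0)}"

definition Espan :: "('v,'e) pre_digraph \<Rightarrow> ('k::field \<Rightarrow> 'a::ring_1 \<Rightarrow> 'a) \<Rightarrow> ('v \<Rightarrow> 'a) \<Rightarrow> 'a set" where
  "Espan G scale eA = {(\<Sum>i\<in>verts G. scale (c i) (eA i)) | c. True}"

definition Int0 :: "('v,'e) pre_digraph \<Rightarrow> ('k::field \<Rightarrow> 'a::ring_1 \<Rightarrow> 'a) \<Rightarrow> ('v \<Rightarrow> 'a)
     \<Rightarrow> ('a \<Rightarrow> 'a) set" where
  "Int0 G scale eA = {(\<lambda>a. e * a - a * e) | e. e \<in> Espan G scale eA}"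

definition hh_class :: "('v,'e) pre_digraph \<Rightarrow> ('k::field \<Rightarrow> 'a::ring_1 \<Rightarrow> 'a) \<Rightarrow> ('v \<Rightarrow> 'a)
     \<Rightarrow> ('a \<Rightarrow> 'a) \<Rightarrow> ('a \<Rightarrow> 'a) set" where
  "hh_class G scale eA d = {d' \<in> Der0 G scale eA. (\<lambda>a. d' a - d a) \<in> Int0 G scale eA}"

definition HH1 :: "('v,'e) pre_digraph \<Rightarrow> ('k::field \<Rightarrow> 'a::ring_1 \<Rightarrow> 'a) \<Rightarrow> ('v \<Rightarrow> 'a)
     \<Rightarrow> ('a \<Rightarrow> 'a) set set" where
  "HH1 G scale eA = hh_class G scale eA ` Der0 G scale eA"

definition induced :: "('v,'e) pre_digraph \<Rightarrow> ('k::field \<Rightarrow> 'a::ring_1 \<Rightarrow> 'a) \<Rightarrow> ('v \<Rightarrow> 'a)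
     \<Rightarrow> ('a \<Rightarrow> 'a) \<Rightarrow> ('a \<Rightarrow> 'a) set \<Rightarrow> ('a \<Rightarrow> 'a) set" where
  "induced G scale eA \<phi> X = hh_class G scale eA (\<phi> \<circ> (SOME d. d \<in> X) \<circ> inv_into UNIV \<phi>)"

definition minimal_relation :: "('v,'e) pre_digraph \<Rightarrow> (('v,'e) path \<Rightarrow> 'k::field) set
     \<Rightarrow> (('v,'e) path \<Rightarrow> 'k) \<Rightarrow> bool" where
  "minimal_relation G I \<rho> \<longleftrightarrow> \<rho> \<in> I \<and> (\<exists>p. \<rho> p \<noteq> 0) \<and>
     (\<forall>S. S \<subset> {p. \<rho> p \<noteq> 0} \<and> S \<noteq> {} \<longrightarrow> (\<lambda>p. if p \<in> S then \<rho> p else 0) \<notin> I)"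

inductive walk_rel :: "('v,'e) pre_digraph \<Rightarrow> (('v,'e) path \<Rightarrow> 'k::field) set
     \<Rightarrow> ('v,'e) walk \<Rightarrow> ('v,'e) walk \<Rightarrow> bool" for G I where
  wr_refl: "is_walk G w \<Longrightarrow> walk_rel G I w w"
| wr_sym: "walk_rel G I w w' \<Longrightarrow> walk_rel G I w' w"
| wr_trans: "walk_rel G I w w' \<Longrightarrow> walk_rel G I w' w'' \<Longrightarrow> walk_rel G I w w''"
| wr_cancel1: "a \<in> arcs G \<Longrightarrow> walk_rel G I (head G a, [(a, False), (a, True)]) (head G a, [])"
| wr_cancel2: "a \<in> arcs G \<Longrightarrow> walk_rel G I (tail G a, [(a, True), (a, False)]) (tail G a, [])"
| wr_comp: "walk_rel G I w1 w1' \<Longrightarrow> walk_rel G I w2 w2' \<Longrightarrow>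
      wend G w1 = fst w2 \<Longrightarrow> wend G w1' = fst w2' \<Longrightarrow>
      walk_rel G I (wcomp w2 w1) (wcomp w2' w1')"
| wr_minrel: "minimal_relation G I \<rho> \<Longrightarrow> \<rho> p \<noteq> 0 \<Longrightarrow> \<rho> q \<noteq> 0 \<Longrightarrow>
      walk_rel G I (path_walk p) (path_walk q)"

definition walk_rel_set :: "('v,'e) pre_digraph \<Rightarrow> (('v,'e) path \<Rightarrow> 'k::field) set
     \<Rightarrow> (('v,'e) walk \<times> ('v,'e) walk) set" where
  "walk_rel_set G I = {(w, w'). walk_rel G I w w'}"

definition closed_walks :: "('v,'e) pre_digraph \<Rightarrow> 'v \<Rightarrow> ('v,'e) walk set" where
  "closed_walks G x0 = {w. is_walk G w \<and> fst w = x0 \<and> wend G w = x0}"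

definition wclass :: "('v,'e) pre_digraph \<Rightarrow> (('v,'e) path \<Rightarrow> 'k::field) set
     \<Rightarrow> ('v,'e) walk \<Rightarrow> ('v,'e) walk set" where
  "wclass G I w = walk_rel_set G I `` {w}"

definition pi1 :: "('v,'e) pre_digraph \<Rightarrow> (('v,'e) path \<Rightarrow> 'k::field) set \<Rightarrow> 'v
     \<Rightarrow> ('v,'e) walk set monoid" where
  "pi1 G I x0 = \<lparr> Congruence.partial_object.carrier = closed_walks G x0 // walk_rel_set G I,
                  Group.monoid.mult = (\<lambda>X Y. wclass G I (wcomp (SOME w. w \<in> X) (SOME w. w \<in> Y))),
                  Group.monoid.one = wclass G I (x0, []) \<rparr>"

definition kplus :: "'k::field monoid" where
  "kplus = \<lparr> Congruence.partial_object.carrier = UNIV, Group.monoid.mult = (+), Group.monoid.one = 0 \<rparr>"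

definition tilde :: "('v,'e) pre_digraph \<Rightarrow> ('k::field \<Rightarrow> 'a::ring_1 \<Rightarrow> 'a) \<Rightarrow> 'e set \<Rightarrow> 'v
     \<Rightarrow> ((('v,'e) path \<Rightarrow> 'k) \<Rightarrow> 'a) \<Rightarrow> (('v,'e) walk set \<Rightarrow> 'k) \<Rightarrow> 'a \<Rightarrow> 'a" where
  "tilde G scale T x0 \<nu> f = (THE d. k_linear scale d \<and>
     (\<forall>u. is_path G u \<longrightarrow>
        d (\<nu> (pbasis u)) =
          scale (f (wclass G (kernel G \<nu>)
                     (wcomp (winv G (tree_walk G T x0 (pend G u)))
                            (wcomp (path_walk u) (tree_walk G T x0 (fst u))))))
                (\<nu> (pbasis u))))"

definition theta :: "('v,'e) pre_digraph \<Rightarrow> ('k::field \<Rightarrow> 'a::ring_1 \<Rightarrow> 'a) \<Rightarrow> ('v \<Rightarrow> 'a)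
     \<Rightarrow> 'e set \<Rightarrow> 'v \<Rightarrow> ((('v,'e) path \<Rightarrow> 'k) \<Rightarrow> 'a) \<Rightarrow> (('v,'e) walk set \<Rightarrow> 'k)
     \<Rightarrow> ('a \<Rightarrow> 'a) set" where
  "theta G scale eA T x0 \<nu> f = hh_class G scale eA (tilde G scale T x0 \<nu> f)"

end

theory Submission
  imports Defs
begin


definition flipl :: "'e \<times> bool \<Rightarrow> 'e \<times> bool" where
  "flipl l = (fst l, \<not> snd l)"

definition winvl :: "('e \<times> bool) list \<Rightarrow> ('e \<times> bool) list" where
  "winvl ls = rev (map (\<lambda>(a,b). (a, \<not> b)) ls)"

lemma winvl_Nil[simp]: "winvl [] = []" by (simp add: winvl_def)

lemma winvl_Cons[simp]: "winvl (l # ls) = winvl ls @ [flipl l]"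
  by (cases l) (simp add: winvl_def flipl_def)

lemma winvl_append[simp]: "winvl (xs @ ys) = winvl ys @ winvl xs"
  by (simp add: winvl_def)

lemma winvl_winvl[simp]: "winvl (winvl ls) = ls"
  by (induct ls) (auto simp: winvl_def rev_map comp_def split: prod.splits)

lemma lstart_flip[simp]: "lstart G (flipl l) = lend G l"
  by (simp add: lstart_def lend_def flipl_def)
lemma lend_flip[simp]: "lend G (flipl l) = lstart G l"
  by (simp add: lstart_def lend_def flipl_def)
lemma fst_flip[simp]: "fst (flipl l) = fst l" by (simp add: flipl_def)

lemma wend_Nil[simp]: "wend G (x, []) = x" by (simp add: wend_def)
lemma wend_Cons[simp]: "wend G (x, l # ls) = wend G (lend G l, ls)"
  by (simp add: wend_def)

lemma wend_append: "wend G (x, xs @ ys) = wend G (wend G (x, xs), ys)"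
  by (induct xs arbitrary: x) auto

lemma walk_ok_verts: "walk_ok G x ls \<Longrightarrow> x \<in> verts G"
  by (cases ls) auto

lemma walk_ok_append:
  "walk_ok G x (xs @ ys) \<longleftrightarrow> walk_ok G x xs \<and> walk_ok G (wend G (x, xs)) ys"
  by (induct xs arbitrary: x) (auto dest: walk_ok_verts)

lemma walk_ok_wend: "walk_ok G x ls \<Longrightarrow> wend G (x, ls) \<in> verts G"
  by (induct ls arbitrary: x) auto

lemma walk_ok_single: "walk_ok G x [l] \<longleftrightarrow> x \<in> verts G \<and> fst l \<in> arcs G \<and> lstart G l = x \<and> lend G l \<in> verts G"
  by auto

lemma walk_ok_inv:
  "walk_ok G x ls \<Longrightarrow> walk_ok G (wend G (x, ls)) (winvl ls) \<and> wend G (wend G (x, ls), winvl ls) = x"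
proof (induct ls arbitrary: x)
  case Nil then show ?case by simp
next
  case (Cons l ls)
  then have h: "x \<in> verts G" "fst l \<in> arcs G" "lstart G l = x" "walk_ok G (lend G l) ls" by auto
  from Cons(1)[OF h(4)] have ih: "walk_ok G (wend G (lend G l, ls)) (winvl ls)"
    "wend G (wend G (lend G l, ls), winvl ls) = lend G l" by auto
  have "lend G l \<in> verts G" by (rule walk_ok_verts[OF h(4)])
  have e: "wend G (wend G (x, l # ls), winvl ls) = lend G l" using ih(2) by simp
  have w: "walk_ok G (lend G l) [flipl l]" using h \<open>lend G l \<in> verts G\<close> by simp
  have "walk_ok G (wend G (x, l # ls)) (winvl (l # ls))"
    unfolding winvl_Cons walk_ok_append using ih(1) e w by simp
  moreover have "wend G (wend G (x, l # ls), winvl (l # ls)) = x"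
    unfolding winvl_Cons wend_append e using h by simp
  ultimately show ?case by blast
qed

lemma is_walk_winv: "is_walk G w \<Longrightarrow> is_walk G (winv G w)"
  using walk_ok_inv[of G "fst w" "snd w"]
  by (simp add: is_walk_def winv_def winvl_def)

lemma winv_eq: "winv G w = (wend G w, winvl (snd w))"
  by (simp add: winv_def winvl_def)

lemma wend_winv: "is_walk G w \<Longrightarrow> wend G (winv G w) = fst w"
  using walk_ok_inv[of G "fst w" "snd w"] by (simp add: is_walk_def winv_eq)

lemma wend_pair: "wend G (fst w, snd w) = wend G w" by simp

lemma wr_congr:
  assumes r: "walk_rel G I (v, m) (v, m')"
    and e: "wend G (v, m) = u" "wend G (v, m') = u"
    and A: "walk_ok G s A" "wend G (s, A) = v"
    and B: "walk_ok G u B"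
  shows "walk_rel G I (s, A @ m @ B) (s, A @ m' @ B)"
proof -
  have rA: "walk_rel G I (s, A) (s, A)" using A by (intro wr_refl) (simp add: is_walk_def)
  have "walk_rel G I (wcomp (v, m) (s, A)) (wcomp (v, m') (s, A))"
    by (rule wr_comp[OF rA r]) (use A in auto)
  then have r1: "walk_rel G I (s, A @ m) (s, A @ m')" by (simp add: wcomp_def)
  have rB: "walk_rel G I (u, B) (u, B)" using B by (intro wr_refl) (simp add: is_walk_def)
  have "walk_rel G I (wcomp (u, B) (s, A @ m)) (wcomp (u, B) (s, A @ m'))"
    by (rule wr_comp[OF r1 rB]) (use A e in \<open>auto simp: wend_append\<close>)
  then show ?thesis by (simp add: wcomp_def)
qed

lemma wr_cancel_single:
  assumes w: "walk_ok G x [l]"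
  shows "walk_rel G I (x, [l, flipl l]) (x, [])"
proof -
  obtain a b where l: "l = (a, b)" by (cases l)
  have a: "a \<in> arcs G" using w l by simp
  show ?thesis
  proof (cases b)
    case True
    then have "x = tail G a" using w l by (simp add: lstart_def)
    then show ?thesis using wr_cancel2[OF a, of I] True l by (simp add: flipl_def)
  next
    case False
    then have "x = head G a" using w l by (simp add: lstart_def)
    then show ?thesis using wr_cancel1[OF a, of I] False l by (simp add: flipl_def)
  qed
qed

lemma wr_cancel_right:
  "walk_ok G x ls \<Longrightarrow> walk_rel G I (x, ls @ winvl ls) (x, [])"
proof (induct ls arbitrary: x)
  case Nil then show ?case by (auto intro: wr_refl simp: is_walk_def)
next
  case (Cons l ls)
  then have h: "x \<in> verts G" "fst l \<in> arcs G" "lstart G l = x" "walk_ok G (lend G l) ls" by auto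
  have v: "lend G l \<in> verts G" by (rule walk_ok_verts[OF h(4)])
  have ih: "walk_rel G I (lend G l, ls @ winvl ls) (lend G l, [])" using Cons h by blast
  have w1: "walk_ok G x [l]" using h v by auto
  have w2: "walk_ok G (lend G l) [flipl l]" using h v by auto
  have e1: "wend G (lend G l, ls @ winvl ls) = lend G l"
    using walk_ok_inv[OF h(4)] by (simp add: wend_append)
  have "walk_rel G I (x, [l] @ (ls @ winvl ls) @ [flipl l]) (x, [l] @ [] @ [flipl l])"
    by (rule wr_congr[OF ih e1 _ w1 _ w2]) auto
  then have "walk_rel G I (x, (l # ls) @ winvl (l # ls)) (x, [l, flipl l])" by simp
  then show ?case using wr_cancel_single[OF w1] wr_trans by blast
qed

lemma wr_cancel_left:
  "walk_ok G x ls \<Longrightarrow> walk_rel G I (wend G (x, ls), winvl ls @ ls) (wend G (x, ls), [])"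
  using wr_cancel_right[of G "wend G (x, ls)" "winvl ls" I] walk_ok_inv[of G x ls] by simp

lemma wclass_eq: "walk_rel G I w w' \<Longrightarrow> wclass G I w = wclass G I w'"
  unfolding wclass_def walk_rel_set_def
  by (auto intro: wr_trans wr_sym)

lemma in_wclass: "w' \<in> wclass G I w \<longleftrightarrow> walk_rel G I w w'"
  by (simp add: wclass_def walk_rel_set_def)

section \<open>Spanning property of maximal trees\<close>

definition treach :: "('v,'e) pre_digraph \<Rightarrow> 'e set \<Rightarrow> 'v \<Rightarrow> 'v set" where
  "treach G T x0 = {y. \<exists>w. is_walk G w \<and> walk_in T w \<and> fst w = x0 \<and> wend G w = y}"

lemma walk_ok_arcs: "walk_ok G y ls \<Longrightarrow> l \<in> set ls \<Longrightarrow> fst l \<in> arcs G"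
  by (induct ls arbitrary: y) auto

lemma wf_lstart_lend:
  assumes "wf_digraph G" "fst l \<in> arcs G"
  shows "lstart G l \<in> verts G" "lend G l \<in> verts G"
  using assms by (auto simp: lstart_def lend_def wf_digraph.tail_in_verts wf_digraph.head_in_verts)

lemma treach_x0: "x0 \<in> verts G \<Longrightarrow> x0 \<in> treach G T x0"
  unfolding treach_def by (rule CollectI, rule exI[of _ "(x0, [])"]) (simp add: is_walk_def walk_in_def)

lemma treach_step:
  assumes wf: "wf_digraph G" and y: "y \<in> treach G T x0" and l: "fst l \<in> T" "fst l \<in> arcs G"
    and st: "lstart G l = y"
  shows "lend G l \<in> treach G T x0"
proof -
  obtain w where w: "is_walk G w" "walk_in T w" "fst w = x0" "wend G w = y"
    using y unfolding treach_def by blast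
  let ?w = "(x0, snd w @ [l])"
  have wl: "walk_ok G y [l]" using wf_lstart_lend[OF wf l(2)] st l by auto
  have w0: "walk_ok G x0 (snd w)" using w(1,3) by (cases w) (simp add: is_walk_def)
  have we: "wend G (x0, snd w) = y" using w(3,4) by (cases w) simp
  have "is_walk G ?w" unfolding is_walk_def using w0 we wl by (simp add: walk_ok_append)
  moreover have "walk_in T ?w" using w l by (auto simp: walk_in_def)
  moreover have "wend G ?w = lend G l" using we by (simp add: wend_append)
  ultimately show ?thesis unfolding treach_def by force
qed

lemma treach_step':
  assumes wf: "wf_digraph G" and y: "y \<in> treach G T x0" and l: "fst l \<in> T" "fst l \<in> arcs G"
    and st: "lend G l = y"
  shows "lstart G l \<in> treach G T x0"
  using treach_step[OF wf y, of "flipl l"] l st by simp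

lemma treach_walk:
  assumes wf: "wf_digraph G"
  shows "walk_ok G y ls \<Longrightarrow> fst ` set ls \<subseteq> T \<Longrightarrow> (y \<in> treach G T x0 \<longleftrightarrow> wend G (y, ls) \<in> treach G T x0)"
proof (induct ls arbitrary: y)
  case Nil then show ?case by simp
next
  case (Cons l ls)
  then have h: "fst l \<in> arcs G" "lstart G l = y" "walk_ok G (lend G l) ls" "fst l \<in> T" by auto
  have "y \<in> treach G T x0 \<longleftrightarrow> lend G l \<in> treach G T x0"
    using treach_step[OF wf _ h(4) h(1) h(2)] treach_step'[OF wf _ h(4) h(1)] h(2) by blast
  then show ?case using Cons h by simp
qed

lemma crossing:
  "walk_ok G y ls \<Longrightarrow> y \<in> R \<Longrightarrow> wend G (y, ls) \<notin> R \<Longrightarrow> \<exists>l\<in>set ls. lstart G l \<in> R \<and> lend G l \<notin> R"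
proof (induct ls arbitrary: y)
  case Nil then show ?case by simp
next
  case (Cons l ls)
  then show ?case by (cases "lend G l \<in> R") auto
qed

lemma reduced_sub:
  assumes "reduced_walk (v, A @ M @ B)"
  shows "reduced_walk (u, M)"
  unfolding reduced_walk_def
proof (intro allI impI)
  fix i assume i: "Suc i < length (snd (u, M))"
  have "Suc (length A + i) < length (snd (v, A @ M @ B))" using i by simp
  then have "\<not> (fst ((A @ M @ B) ! (length A + i)) = fst ((A @ M @ B) ! Suc (length A + i)) \<and>
        snd ((A @ M @ B) ! (length A + i)) \<noteq> snd ((A @ M @ B) ! Suc (length A + i)))"
    using assms unfolding reduced_walk_def by (metis snd_conv)
  moreover have "(A @ M @ B) ! (length A + i) = M ! i" using i by (simp add: nth_append)
  moreover have "(A @ M @ B) ! Suc (length A + i) = M ! Suc i" using i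
    by (simp add: nth_append del: append_assoc)
  ultimately show "\<not> (fst (snd (u, M) ! i) = fst (snd (u, M) ! Suc i) \<and> snd (snd (u, M) ! i) \<noteq> snd (snd (u, M) ! Suc i))"
    by simp
qed

lemma spanning:
  assumes wf: "wf_digraph G" and conn: "quiver_connected G" and mt: "maximal_tree G T"
    and x0: "x0 \<in> verts G" and x: "x \<in> verts G"
  shows "x \<in> treach G T x0"
proof (rule ccontr)
  assume nx: "x \<notin> treach G T x0"
  define R where "R = treach G T x0"
  have fT: "forest G T" using mt by (simp add: maximal_tree_def)
  have Tarcs: "T \<subseteq> arcs G" using fT by (simp add: forest_def)
  obtain w where w: "is_walk G w" "fst w = x0" "wend G w = x"
    using conn x0 x unfolding quiver_connected_def by blast
  obtain l where l: "l \<in> set (snd w)" "lstart G l \<in> R" "lend G l \<notin> R"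
    using crossing[of G x0 "snd w" R] w nx treach_x0[OF x0] unfolding R_def is_walk_def
    by (metis prod.collapse)
  define a where "a = fst l"
  have aA: "a \<in> arcs G" using walk_ok_arcs[of G x0 "snd w" l] w l unfolding is_walk_def a_def
    by (metis prod.collapse)
  have aT: "a \<notin> T"
  proof
    assume "a \<in> T"
    then have "lend G l \<in> R" using treach_step[OF wf, of "lstart G l" T x0 l] l aA unfolding R_def a_def by blast
    with l show False by simp
  qed
  have status: "(lstart G l' \<in> R) \<noteq> (lend G l' \<in> R)" if "fst l' = a" for l'
  proof (cases "snd l' = snd l")
    case True then show ?thesis using l that by (auto simp: lstart_def lend_def a_def split: if_splits)
  next
    case False then show ?thesis using l that by (auto simp: lstart_def lend_def a_def split: if_splits)
  qed
  have Tstat: "(y \<in> R) = (wend G (y, ls) \<in> R)" if "walk_ok G y ls" "\<forall>z\<in>set ls. fst z \<noteq> a"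
    "fst ` set ls \<subseteq> insert a T" for y ls
    using treach_walk[OF wf that(1), of T x0] that(2,3) unfolding R_def by auto
  have "forest G (insert a T)"
    unfolding forest_def
  proof (intro conjI notI)
    show "insert a T \<subseteq> arcs G" using aA Tarcs by auto
  next
    assume "\<exists>W. is_walk G W \<and> walk_in (insert a T) W \<and> snd W \<noteq> [] \<and> wend G W = fst W \<and> reduced_walk W"
    then obtain v ls where W: "walk_ok G v ls" "fst ` set ls \<subseteq> insert a T" "ls \<noteq> []"
      "wend G (v, ls) = v" "reduced_walk (v, ls)"
      unfolding is_walk_def walk_in_def by (metis prod.collapse fst_conv snd_conv)
    show False
    proof (cases "\<exists>z\<in>set ls. fst z = a")
      case False
      then have "walk_in T (v, ls)" using W(2) by (auto simp: walk_in_def)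
      moreover have "\<not> (is_walk G (v, ls) \<and> walk_in T (v, ls) \<and> snd (v, ls) \<noteq> [] \<and> wend G (v, ls) = fst (v, ls) \<and> reduced_walk (v, ls))"
        using fT unfolding forest_def by blast
      ultimately show False using W by (simp add: is_walk_def)
    next
      case True
      then obtain W1 s W2 where sp: "ls = W1 @ s # W2" "fst s = a" "\<forall>z\<in>set W1. fst z \<noteq> a"
        using split_list_first_prop[of ls "\<lambda>z. fst z = a"] by blast
      have "walk_ok G v W1 \<and> walk_ok G (wend G (v, W1)) (s # W2)"
        using W(1) sp(1) walk_ok_append[of G v W1 "s # W2"] by simp
      then have w1: "walk_ok G v W1" and w2: "walk_ok G (wend G (v, W1)) (s # W2)" by blast+
      have ls_s: "lstart G s = wend G (v, W1)" and w2': "walk_ok G (lend G s) W2" using w2 by auto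
      have e2: "wend G (lend G s, W2) = v" using W(4) sp(1) by (simp add: wend_append)
      have s1: "(v \<in> R) = (lstart G s \<in> R)"
        using Tstat[OF w1 sp(3)] W(2) sp(1) ls_s by auto
      show False
      proof (cases "\<exists>z\<in>set W2. fst z = a")
        case False
        then have "(lend G s \<in> R) = (v \<in> R)" using Tstat[OF w2'] W(2) sp(1) e2 by auto
        then show False using s1 status[OF sp(2)] by simp
      next
        case True
        then obtain M s' W3 where sp2: "W2 = M @ s' # W3" "fst s' = a" "\<forall>z\<in>set M. fst z \<noteq> a"
          using split_list_first_prop[of W2 "\<lambda>z. fst z = a"] by blast
        have "walk_ok G (lend G s) M \<and> walk_ok G (wend G (lend G s, M)) (s' # W3)"
          using w2' sp2(1) walk_ok_append[of G "lend G s" M "s' # W3"] by simp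
        then have wM: "walk_ok G (lend G s) M" and w3: "walk_ok G (wend G (lend G s, M)) (s' # W3)" by blast+
        have ls_s': "lstart G s' = wend G (lend G s, M)" using w3 by auto
        have s2: "(lend G s \<in> R) = (lstart G s' \<in> R)"
          using Tstat[OF wM sp2(3)] W(2) sp(1) sp2(1) ls_s' by auto
        have "snd s' \<noteq> snd s"
        proof
          assume "snd s' = snd s"
          then have "s' = s" using sp(2) sp2(2) by (simp add: prod_eq_iff)
          then show False using s2 status[OF sp(2)] by simp
        qed
        then have "lstart G s' = lend G s" using sp(2) sp2(2)
          by (auto simp: lstart_def lend_def split: if_splits)
        then have closed: "wend G (lend G s, M) = lend G s" using ls_s' by simp
        show False
        proof (cases "M = []")
          case True
          have "ls ! length W1 = s" "ls ! Suc (length W1) = s'" using sp(1) sp2(1) True by (simp_all add: nth_append)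
          moreover have "Suc (length W1) < length ls" using sp(1) sp2(1) True by simp
          ultimately show False using W(5) \<open>snd s' \<noteq> snd s\<close> sp(2) sp2(2)
            unfolding reduced_walk_def by (metis snd_conv)
        next
          case False
          have "reduced_walk (lend G s, M)"
            using reduced_sub[of v "W1 @ [s]" M "s' # W3" "lend G s"] W(5) sp(1) sp2(1) by simp
          moreover have "walk_in T (lend G s, M)" using sp2(3) W(2) sp(1) sp2(1) by (auto simp: walk_in_def)
          moreover have "\<not> (is_walk G (lend G s, M) \<and> walk_in T (lend G s, M) \<and> snd (lend G s, M) \<noteq> [] \<and> wend G (lend G s, M) = fst (lend G s, M) \<and> reduced_walk (lend G s, M))"
            using fT unfolding forest_def by blast
          ultimately show False using wM closed False by (simp add: is_walk_def)
        qed
      qed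
    qed
  qed
  moreover have "\<not> forest G (insert a T)" using mt aA aT unfolding maximal_tree_def by simp
  ultimately show False by contradiction
qed

lemma tree_walk_props:
  assumes wf: "wf_digraph G" and conn: "quiver_connected G" and mt: "maximal_tree G T"
    and x0: "x0 \<in> verts G" and x: "x \<in> verts G"
  shows "is_walk G (tree_walk G T x0 x) \<and> walk_in T (tree_walk G T x0 x) \<and>
         fst (tree_walk G T x0 x) = x0 \<and> wend G (tree_walk G T x0 x) = x"
proof -
  let ?P = "\<lambda>w. is_walk G w \<and> walk_in T w \<and> fst w = x0 \<and> wend G w = x"
  obtain w where "?P w" using spanning[OF assms] unfolding treach_def by blast
  then obtain w' where "?P w'" "\<forall>y. ?P y \<longrightarrow> length (snd w') \<le> length (snd y)"
    using ex_has_least_nat[of ?P w "\<lambda>w. length (snd w)"] by blast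
  then have "\<exists>w. ?P w \<and> (\<forall>w'. ?P w' \<longrightarrow> length (snd w) \<le> length (snd w'))" by blast
  then have "?P (SOME w. ?P w \<and> (\<forall>w'. ?P w' \<longrightarrow> length (snd w) \<le> length (snd w')))"
    by (rule someI_ex[THEN conjunct1])
  then show ?thesis by (simp only: tree_walk_def conj_assoc)
qed



definition pcomp :: "('v,'e) path \<Rightarrow> ('v,'e) path \<Rightarrow> ('v,'e) path" where
  "pcomp p2 p1 = (fst p1, snd p1 @ snd p2)"

abbreviation tw :: "'e list \<Rightarrow> ('e \<times> bool) list" where
  "tw xs \<equiv> map (\<lambda>a. (a, True)) xs"

lemma is_path_iff: "is_path G p \<longleftrightarrow> walk_ok G (fst p) (tw (snd p))"
  by (simp add: is_path_def is_walk_def path_walk_def)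

lemma pend_eq: "pend G p = wend G (fst p, tw (snd p))"
  by (simp add: pend_def path_walk_def)

lemma pcomp_path:
  assumes "is_path G p1" "is_path G p2" "pend G p1 = fst p2"
  shows "is_path G (pcomp p2 p1)" "pend G (pcomp p2 p1) = pend G p2"
  using assms by (auto simp: is_path_iff pend_eq pcomp_def walk_ok_append wend_append)

lemma path_split:
  assumes "is_path G (fst p, take j (snd p))" "is_path G (pend G (fst p, take j (snd p)), drop j (snd p))"
  shows "is_path G p"
proof -
  have "p = pcomp (pend G (fst p, take j (snd p)), drop j (snd p)) (fst p, take j (snd p))"
    by (simp add: pcomp_def)
  then show ?thesis using pcomp_path(1)[OF assms] by simp
qed

lemma pbasis_kQ: "is_path G p \<Longrightarrow> pbasis p \<in> kQ G"
  by (simp add: kQ_def pbasis_def)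

lemma kQ_path: "c \<in> kQ G \<Longrightarrow> c p \<noteq> 0 \<Longrightarrow> is_path G p"
  unfolding kQ_def by blast

lemma kQ_mult_kQ:
  assumes "c \<in> kQ G" "d \<in> kQ G"
  shows "kQ_mult G c d \<in> kQ G"
  unfolding kQ_def
proof (intro CollectI allI impI)
  fix p assume "kQ_mult G c d p \<noteq> 0"
  then obtain j where "c (pend G (fst p, take j (snd p)), drop j (snd p)) * d (fst p, take j (snd p)) \<noteq> 0"
    unfolding kQ_mult_def using sum.not_neutral_contains_not_neutral by blast
  then show "is_path G p" using path_split kQ_path assms by (metis mult_not_zero)
qed

lemma kQ_add: "c \<in> kQ G \<Longrightarrow> d \<in> kQ G \<Longrightarrow> (\<lambda>p. c p + d p) \<in> kQ G"
  by (auto simp: kQ_def) (metis add.right_neutral)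
lemma kQ_diff: "c \<in> kQ G \<Longrightarrow> d \<in> kQ G \<Longrightarrow> (\<lambda>p. c p - d p) \<in> kQ G"
  by (auto simp: kQ_def) (metis diff_self)
lemma kQ_smult: "c \<in> kQ G \<Longrightarrow> kQ_smult a c \<in> kQ G"
  by (auto simp: kQ_def kQ_smult_def)
lemma kQ_zero: "(\<lambda>p. 0) \<in> kQ G"
  by (auto simp: kQ_def)
lemma kQ_restrict: "c \<in> kQ G \<Longrightarrow> (\<lambda>p. if P p then c p else 0) \<in> kQ G"
  by (auto simp: kQ_def)

lemma kQ_mult_left_e:
  "kQ_mult G (pbasis (y, [])) c = (\<lambda>p. if pend G p = y then c p else 0)"
proof (rule ext)
  fix p :: "('a,'b) path"
  let ?L = "length (snd p)"
  have TT: "\<And>j. j \<in> {..?L} \<Longrightarrow> pbasis (y, []) (pend G (fst p, take j (snd p)), drop j (snd p)) * c (fst p, take j (snd p))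
     = (if j = ?L then (if pend G p = y then c p else 0) else 0)"
    by (auto simp: pbasis_def)
  have "kQ_mult G (pbasis (y, [])) c p = (\<Sum>j\<le>?L. if j = ?L then (if pend G p = y then c p else 0) else 0)"
    unfolding kQ_mult_def by (rule sum.cong[OF refl TT])
  then show "kQ_mult G (pbasis (y, [])) c p = (if pend G p = y then c p else 0)" by simp
qed

lemma kQ_mult_right_e:
  "kQ_mult G c (pbasis (x, [])) = (\<lambda>p. if fst p = x then c p else 0)"
proof (rule ext)
  fix p :: "('a,'b) path"
  let ?L = "length (snd p)"
  have TT: "\<And>j. j \<in> {..?L} \<Longrightarrow> c (pend G (fst p, take j (snd p)), drop j (snd p)) * pbasis (x, []) (fst p, take j (snd p))
     = (if j = 0 then (if fst p = x then c p else 0) else 0)"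
    by (cases p) (auto simp: pbasis_def pend_def path_walk_def)
  have "kQ_mult G c (pbasis (x, [])) p = (\<Sum>j\<le>?L. if j = 0 then (if fst p = x then c p else 0) else 0)"
    unfolding kQ_mult_def by (rule sum.cong[OF refl TT])
  then show "kQ_mult G c (pbasis (x, [])) p = (if fst p = x then c p else 0)" by simp
qed


definition Wu :: "('v,'e) pre_digraph \<Rightarrow> 'e set \<Rightarrow> 'v \<Rightarrow> ('v,'e) path \<Rightarrow> ('v,'e) walk" where
  "Wu G T x0 u = wcomp (winv G (tree_walk G T x0 (pend G u)))
                            (wcomp (path_walk u) (tree_walk G T x0 (fst u)))"

definition Fw :: "('v,'e) pre_digraph \<Rightarrow> (('v,'e) path \<Rightarrow> 'k::field) set \<Rightarrow> 'e set \<Rightarrow> 'v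
    \<Rightarrow> (('v,'e) walk set \<Rightarrow> 'k) \<Rightarrow> ('v,'e) path \<Rightarrow> 'k" where
  "Fw G K T x0 f u = f (wclass G K (Wu G T x0 u))"

definition Phi :: "('v,'e) pre_digraph \<Rightarrow> (('v,'e) path \<Rightarrow> 'k::field) set \<Rightarrow> 'e set \<Rightarrow> 'v
    \<Rightarrow> (('v,'e) walk set \<Rightarrow> 'k) \<Rightarrow> (('v,'e) path \<Rightarrow> 'k) \<Rightarrow> (('v,'e) path \<Rightarrow> 'k)" where
  "Phi G K T x0 f c = (\<lambda>p. Fw G K T x0 f p * c p)"

definition Dm :: "('v,'e) pre_digraph \<Rightarrow> 'e set \<Rightarrow> 'v \<Rightarrow> ((('v,'e) path \<Rightarrow> 'k::field) \<Rightarrow> 'a::ring_1)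
    \<Rightarrow> (('v,'e) walk set \<Rightarrow> 'k) \<Rightarrow> 'a \<Rightarrow> 'a" where
  "Dm G T x0 \<rho> f a = \<rho> (Phi G (kernel G \<rho>) T x0 f (SOME c. c \<in> kQ G \<and> \<rho> c = a))"

lemma k_algebra_facts:
  assumes "k_algebra scale"
  shows "scale a (x + y) = scale a x + scale a y" "scale (a + b) x = scale a x + scale b x"
    "scale (a * b) x = scale a (scale b x)" "scale 1 x = x"
    "scale a (x * y) = scale a x * y" "scale a (x * y) = x * scale a y"
  using assms unfolding k_algebra_def by blast+

lemma scale_zero_left: "k_algebra scale \<Longrightarrow> scale 0 x = 0"
  using k_algebra_facts(2)[of scale 0 0 x] by simp
lemma scale_zero_right: "k_algebra scale \<Longrightarrow> scale a 0 = 0"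
  using k_algebra_facts(1)[of scale a 0 0] by simp
lemma scale_minus: "k_algebra scale \<Longrightarrow> scale (- a) x = - scale a x"
proof -
  assume k: "k_algebra scale"
  have "scale a x + scale (- a) x = 0" using k_algebra_facts(2)[OF k, of a "- a" x] scale_zero_left[OF k, of x] by simp
  then show ?thesis using minus_unique by metis
qed

lemma wcomp_walk:
  assumes "is_walk G w1" "is_walk G w2" "wend G w1 = fst w2"
  shows "is_walk G (wcomp w2 w1) \<and> wend G (wcomp w2 w1) = wend G w2 \<and> fst (wcomp w2 w1) = fst w1"
proof -
  obtain x1 l1 x2 l2 where w: "w1 = (x1, l1)" "w2 = (x2, l2)" by (cases w1, cases w2)
  show ?thesis using assms unfolding w
    by (simp add: is_walk_def wcomp_def walk_ok_append wend_append)
qed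

locale pres =
  fixes G :: "('v,'e) pre_digraph" and scale :: "'k::field \<Rightarrow> 'a::ring_1 \<Rightarrow> 'a"
    and eA :: "'v \<Rightarrow> 'a" and \<rho> :: "(('v,'e) path \<Rightarrow> 'k) \<Rightarrow> 'a" and T :: "'e set" and x0 :: 'v
  assumes fin: "fin_digraph G" and conn: "quiver_connected G" and mt: "maximal_tree G T"
    and x0: "x0 \<in> verts G"
    and kalg: "k_algebra scale" and hom: "kQ_alg_hom G scale \<rho>" and surj: "\<rho> ` kQ G = UNIV"
    and adm: "admissible G (kernel G \<rho>)"
    and idem: "\<forall>i\<in>verts G. \<rho> (pbasis (i, [])) = eA i"
begin

abbreviation "K \<equiv> kernel G \<rho>"
abbreviation "gam x \<equiv> tree_walk G T x0 x"

lemma wf: "wf_digraph G" using fin unfolding fin_digraph_def by blast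

lemma gam: assumes "x \<in> verts G"
  shows "walk_ok G x0 (snd (gam x))" "wend G (x0, snd (gam x)) = x" "fst (gam x) = x0"
    "is_walk G (gam x)" "wend G (gam x) = x"
  using tree_walk_props[OF wf conn mt x0 assms]
  by (metis is_walk_def prod.collapse)+

lemma rho_add: "c \<in> kQ G \<Longrightarrow> d \<in> kQ G \<Longrightarrow> \<rho> (\<lambda>p. c p + d p) = \<rho> c + \<rho> d"
  using hom unfolding kQ_alg_hom_def by blast
lemma rho_mult: "c \<in> kQ G \<Longrightarrow> d \<in> kQ G \<Longrightarrow> \<rho> (kQ_mult G c d) = \<rho> c * \<rho> d"
  using hom unfolding kQ_alg_hom_def by blast
lemma rho_smult: "c \<in> kQ G \<Longrightarrow> \<rho> (kQ_smult a c) = scale a (\<rho> c)"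
  using hom unfolding kQ_alg_hom_def by blast
lemma rho_zero: "\<rho> (\<lambda>p. 0) = 0"
  using rho_add[OF kQ_zero kQ_zero] by simp
lemma rho_diff: assumes "c \<in> kQ G" "d \<in> kQ G" shows "\<rho> (\<lambda>p. c p - d p) = \<rho> c - \<rho> d"
proof -
  have "\<rho> c = \<rho> (\<lambda>p. (c p - d p) + d p)" by simp
  also have "\<dots> = \<rho> (\<lambda>p. c p - d p) + \<rho> d" by (rule rho_add[OF kQ_diff[OF assms] assms(2)])
  finally show ?thesis by (simp add: algebra_simps)
qed

lemma K_kQ: "c \<in> K \<Longrightarrow> c \<in> kQ G" by (simp add: kernel_def)
lemma K_add: "c \<in> K \<Longrightarrow> d \<in> K \<Longrightarrow> (\<lambda>p. c p + d p) \<in> K"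
  by (simp add: kernel_def kQ_add rho_add)
lemma K_diff: "c \<in> K \<Longrightarrow> d \<in> K \<Longrightarrow> (\<lambda>p. c p - d p) \<in> K"
  by (simp add: kernel_def kQ_diff rho_diff)
lemma K_smult: "c \<in> K \<Longrightarrow> kQ_smult a c \<in> K"
  by (simp add: kernel_def kQ_smult rho_smult scale_zero_right[OF kalg])
lemma K_diff': "c \<in> kQ G \<Longrightarrow> d \<in> kQ G \<Longrightarrow> \<rho> c = \<rho> d \<Longrightarrow> (\<lambda>p. c p - d p) \<in> K"
  by (simp add: kernel_def kQ_diff rho_diff)

lemma minrel_ends:
  assumes m: "minimal_relation G K r" and p: "r p \<noteq> 0" and q: "r q \<noteq> 0"
  shows "fst q = fst p \<and> pend G q = pend G p"
proof -
  let ?x = "fst p" and ?y = "pend G p"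
  have rK: "r \<in> K" using m by (simp add: minimal_relation_def)
  have pp: "is_path G (?x, [])" using kQ_path[OF K_kQ[OF rK] p]
    by (simp add: is_path_iff walk_ok_verts)
  have py: "is_path G (?y, [])" using kQ_path[OF K_kQ[OF rK] p]
    by (simp add: is_path_iff pend_eq walk_ok_wend)
  define r1 where "r1 = kQ_mult G r (pbasis (?x, []))"
  have r1: "r1 \<in> K" unfolding r1_def kernel_def
    using rho_mult[OF K_kQ[OF rK] pbasis_kQ[OF pp]] rK kQ_mult_kQ[OF K_kQ[OF rK] pbasis_kQ[OF pp]]
    by (simp add: kernel_def)
  define r2 where "r2 = kQ_mult G (pbasis (?y, [])) r1"
  have r2: "r2 \<in> K" unfolding r2_def kernel_def
    using rho_mult[OF pbasis_kQ[OF py] K_kQ[OF r1]] r1 kQ_mult_kQ[OF pbasis_kQ[OF py] K_kQ[OF r1]]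
    by (simp add: kernel_def)
  define S where "S = {q. r q \<noteq> 0 \<and> fst q = ?x \<and> pend G q = ?y}"
  have r2S: "r2 = (\<lambda>q. if q \<in> S then r q else 0)"
    unfolding r2_def r1_def kQ_mult_left_e kQ_mult_right_e S_def by (auto intro!: ext)
  have "p \<in> S" unfolding S_def mem_Collect_eq using p by blast
  then have "S \<subseteq> {q. r q \<noteq> 0}" "S \<noteq> {}" unfolding S_def by blast+
  moreover have mm: "\<forall>S'. S' \<subset> {q. r q \<noteq> 0} \<and> S' \<noteq> {} \<longrightarrow> (\<lambda>q. if q \<in> S' then r q else 0) \<notin> K"
    by (rule conjunct2[OF conjunct2[OF m[unfolded minimal_relation_def]]])
  ultimately have "S = {q. r q \<noteq> 0}" using spec[OF mm, of S] r2 r2S by blast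
  then show ?thesis using q S_def by blast
qed

lemma wrel_props:
  "walk_rel G K w w' \<Longrightarrow> is_walk G w \<and> is_walk G w' \<and> fst w = fst w' \<and> wend G w = wend G w'"
proof (induct rule: walk_rel.induct)
  case (wr_refl w) then show ?case by simp
next
  case (wr_sym w w') then show ?case by simp
next
  case (wr_trans w w' w'') then show ?case by simp
next
  case (wr_cancel1 a)
  have "tail G a \<in> verts G" "head G a \<in> verts G"
    using wf_digraph.tail_in_verts[OF wf wr_cancel1] wf_digraph.head_in_verts[OF wf wr_cancel1] by auto
  then show ?case using wr_cancel1 by (simp add: is_walk_def lstart_def lend_def)
next
  case (wr_cancel2 a)
  have "tail G a \<in> verts G" "head G a \<in> verts G"
    using wf_digraph.tail_in_verts[OF wf wr_cancel2] wf_digraph.head_in_verts[OF wf wr_cancel2] by auto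
  then show ?case using wr_cancel2 by (simp add: is_walk_def lstart_def lend_def)
next
  case (wr_comp w1 w1' w2 w2')
  have "is_walk G (wcomp w2 w1) \<and> wend G (wcomp w2 w1) = wend G w2 \<and> fst (wcomp w2 w1) = fst w1"
    using wr_comp(2,4,5) by (intro wcomp_walk) simp_all
  moreover have "is_walk G (wcomp w2' w1') \<and> wend G (wcomp w2' w1') = wend G w2' \<and> fst (wcomp w2' w1') = fst w1'"
    using wr_comp(2,4,6) by (intro wcomp_walk) simp_all
  ultimately show ?case using wr_comp by simp
next
  case (wr_minrel r p q)
  have rK: "r \<in> K" using wr_minrel(1) by (simp add: minimal_relation_def)
  have "is_path G p" "is_path G q" using kQ_path[OF K_kQ[OF rK]] wr_minrel(2,3) by auto
  moreover have "fst q = fst p" "pend G q = pend G p" using minrel_ends[OF wr_minrel(1,2,3)] by auto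
  ultimately show ?case unfolding is_path_def pend_def path_walk_def by simp
qed

end



context pres begin

lemma path_ends: "is_path G u \<Longrightarrow> fst u \<in> verts G \<and> pend G u \<in> verts G"
  by (simp add: is_path_iff pend_eq walk_ok_verts walk_ok_wend)

lemma Wu_eq:
  assumes u: "is_path G u"
  shows "Wu G T x0 u = (x0, snd (gam (fst u)) @ tw (snd u) @ winvl (snd (gam (pend G u))))"
proof -
  have v: "fst u \<in> verts G" "pend G u \<in> verts G" using path_ends[OF u] by auto
  show ?thesis unfolding Wu_def winv_eq wcomp_def path_walk_def using gam(3)[OF v(1)] by simp
qed

lemma Wu_walk:
  assumes u: "is_path G u"
  shows "walk_ok G x0 (snd (gam (fst u)) @ tw (snd u) @ winvl (snd (gam (pend G u))))"
    "wend G (x0, snd (gam (fst u)) @ tw (snd u) @ winvl (snd (gam (pend G u)))) = x0"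
proof -
  have v: "fst u \<in> verts G" "pend G u \<in> verts G" using path_ends[OF u] by auto
  have a: "walk_ok G x0 (snd (gam (fst u)))" "wend G (x0, snd (gam (fst u))) = fst u" using gam[OF v(1)] by auto
  have b: "walk_ok G (fst u) (tw (snd u))" "wend G (fst u, tw (snd u)) = pend G u" using u by (simp_all add: is_path_iff pend_eq)
  have c: "walk_ok G (pend G u) (winvl (snd (gam (pend G u))))" "wend G (pend G u, winvl (snd (gam (pend G u)))) = x0"
    using walk_ok_inv[OF gam(1)[OF v(2)]] gam(2)[OF v(2)] by auto
  show "walk_ok G x0 (snd (gam (fst u)) @ tw (snd u) @ winvl (snd (gam (pend G u))))"
    using a b c by (simp add: walk_ok_append wend_append)
  show "wend G (x0, snd (gam (fst u)) @ tw (snd u) @ winvl (snd (gam (pend G u)))) = x0"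
    using a b c by (simp add: wend_append)
qed

lemma Wu_closed: "is_path G u \<Longrightarrow> Wu G T x0 u \<in> closed_walks G x0"
  using Wu_eq Wu_walk by (simp add: closed_walks_def is_walk_def)

lemma carrier_pi1: "w \<in> closed_walks G x0 \<Longrightarrow> wclass G K w \<in> carrier (pi1 G K x0)"
  unfolding pi1_def wclass_def by (simp add: quotientI)

lemma pi1_mult:
  assumes w1: "w1 \<in> closed_walks G x0" and w2: "w2 \<in> closed_walks G x0"
  shows "wclass G K w1 \<otimes>\<^bsub>pi1 G K x0\<^esub> wclass G K w2 = wclass G K (wcomp w1 w2)"
proof -
  have r1: "walk_rel G K w1 w1" "walk_rel G K w2 w2" using w1 w2 by (auto intro: wr_refl simp: closed_walks_def)
  define a where "a = (SOME w. w \<in> wclass G K w1)"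
  define b where "b = (SOME w. w \<in> wclass G K w2)"
  have ra: "walk_rel G K w1 a" unfolding a_def in_wclass[symmetric] by (rule someI[of _ w1]) (simp add: in_wclass r1)
  have rb: "walk_rel G K w2 b" unfolding b_def in_wclass[symmetric] by (rule someI[of _ w2]) (simp add: in_wclass r1)
  have pa: "fst a = x0" "wend G a = x0" using wrel_props[OF ra] w1 by (auto simp: closed_walks_def)
  have pb: "fst b = x0" "wend G b = x0" using wrel_props[OF rb] w2 by (auto simp: closed_walks_def)
  have "walk_rel G K (wcomp w1 w2) (wcomp a b)"
    by (rule wr_comp[OF rb ra]) (use w1 w2 pa pb in \<open>auto simp: closed_walks_def\<close>)
  then have "wclass G K (wcomp a b) = wclass G K (wcomp w1 w2)" using wclass_eq by metis
  then show ?thesis unfolding pi1_def a_def b_def by simp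
qed

lemma hom_f:
  assumes f: "f \<in> hom (pi1 G K x0) kplus" and "X \<in> carrier (pi1 G K x0)" "Y \<in> carrier (pi1 G K x0)"
  shows "f (X \<otimes>\<^bsub>pi1 G K x0\<^esub> Y) = f X + f Y"
  using f assms unfolding hom_def kplus_def by simp

lemma closed_comp: "w1 \<in> closed_walks G x0 \<Longrightarrow> w2 \<in> closed_walks G x0 \<Longrightarrow> wcomp w1 w2 \<in> closed_walks G x0"
  unfolding closed_walks_def using wcomp_walk by fastforce

lemma f_mult:
  assumes f: "f \<in> hom (pi1 G K x0) kplus" and w1: "w1 \<in> closed_walks G x0" and w2: "w2 \<in> closed_walks G x0"
  shows "f (wclass G K (wcomp w1 w2)) = f (wclass G K w1) + f (wclass G K w2)"
  using hom_f[OF f carrier_pi1[OF w1] carrier_pi1[OF w2]] pi1_mult[OF w1 w2] by simp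

lemma f_one:
  assumes f: "f \<in> hom (pi1 G K x0) kplus"
  shows "f (wclass G K (x0, [])) = 0"
proof -
  have c: "(x0, []) \<in> closed_walks G x0" using x0 by (simp add: closed_walks_def is_walk_def)
  have "f (wclass G K (wcomp (x0, []) (x0, []))) = f (wclass G K (x0, [])) + f (wclass G K (x0, []))"
    by (rule f_mult[OF f c c])
  then have "f (wclass G K (x0, [])) = f (wclass G K (x0, [])) + f (wclass G K (x0, []))"
    by (simp only: wcomp_def fst_conv snd_conv append_Nil)
  then show ?thesis by (rule add_cancel_right_right[THEN iffD1])
qed

lemma F_triv:
  assumes f: "f \<in> hom (pi1 G K x0) kplus" and i: "i \<in> verts G"
  shows "Fw G K T x0 f (i, []) = 0"
proof -
  have p: "is_path G (i, [])" using i by (simp add: is_path_iff)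
  have pe: "pend G (i, []) = i" by (simp add: pend_eq)
  have "walk_rel G K (x0, snd (gam i) @ winvl (snd (gam i))) (x0, [])"
    by (rule wr_cancel_right[OF gam(1)[OF i]])
  then have "wclass G K (Wu G T x0 (i, [])) = wclass G K (x0, [])"
    unfolding Wu_eq[OF p] pe by (simp add: wclass_eq)
  then show ?thesis unfolding Fw_def using f_one[OF f] by simp
qed

lemma F_comp:
  assumes f: "f \<in> hom (pi1 G K x0) kplus" and p1: "is_path G p1" and p2: "is_path G p2"
    and e: "pend G p1 = fst p2"
  shows "Fw G K T x0 f (pcomp p2 p1) = Fw G K T x0 f p2 + Fw G K T x0 f p1"
proof -
  have pc: "is_path G (pcomp p2 p1)" "pend G (pcomp p2 p1) = pend G p2" using pcomp_path[OF p1 p2 e] by auto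
  have fpc: "fst (pcomp p2 p1) = fst p1" by (simp add: pcomp_def)
  let ?x = "fst p1" and ?y = "fst p2" and ?z = "pend G p2"
  have v: "?x \<in> verts G" "?y \<in> verts G" "?z \<in> verts G" using path_ends[OF p1] path_ends[OF p2] by auto
  let ?gx = "snd (gam ?x)" and ?gy = "snd (gam ?y)" and ?gz = "snd (gam ?z)"
  let ?t1 = "tw (snd p1)" and ?t2 = "tw (snd p2)"
  have s: "f (wclass G K (wcomp (Wu G T x0 p2) (Wu G T x0 p1))) = Fw G K T x0 f p2 + Fw G K T x0 f p1"
    unfolding Fw_def by (rule f_mult[OF f Wu_closed[OF p2] Wu_closed[OF p1]])
  have wc: "wcomp (Wu G T x0 p2) (Wu G T x0 p1) = (x0, (?gx @ ?t1) @ (winvl ?gy @ ?gy) @ (?t2 @ winvl ?gz))"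
    unfolding wcomp_def Wu_eq[OF p1] Wu_eq[OF p2] e by simp
  have wp: "Wu G T x0 (pcomp p2 p1) = (x0, (?gx @ ?t1) @ [] @ (?t2 @ winvl ?gz))"
    unfolding Wu_eq[OF pc(1)] pc(2) fpc by (simp add: pcomp_def)
  have cl: "walk_rel G K (wend G (x0, ?gy), winvl ?gy @ ?gy) (wend G (x0, ?gy), [])"
    by (rule wr_cancel_left[OF gam(1)[OF v(2)]])
  have ey: "wend G (x0, ?gy) = ?y" by (rule gam(2)[OF v(2)])
  have wA: "walk_ok G x0 (?gx @ ?t1)" "wend G (x0, ?gx @ ?t1) = ?y"
    using gam[OF v(1)] p1 e by (auto simp: walk_ok_append wend_append is_path_iff pend_eq)
  have wB: "walk_ok G ?y (?t2 @ winvl ?gz)"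
    using p2 walk_ok_inv[OF gam(1)[OF v(3)]] gam(2)[OF v(3)]
    by (auto simp: walk_ok_append is_path_iff pend_eq)
  have e1: "wend G (?y, winvl ?gy @ ?gy) = ?y"
    using walk_ok_inv[OF gam(1)[OF v(2)]] ey by (simp add: wend_append)
  have "walk_rel G K (x0, (?gx @ ?t1) @ (winvl ?gy @ ?gy) @ (?t2 @ winvl ?gz)) (x0, (?gx @ ?t1) @ [] @ (?t2 @ winvl ?gz))"
    by (rule wr_congr[OF cl[unfolded ey] e1 _ wA wB]) simp
  then have "wclass G K (wcomp (Wu G T x0 p2) (Wu G T x0 p1)) = wclass G K (Wu G T x0 (pcomp p2 p1))"
    unfolding wc wp by (rule wclass_eq)
  then show ?thesis using s unfolding Fw_def by simp
qed

lemma F_minrel: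
  assumes m: "minimal_relation G K r" and p: "r p \<noteq> 0" and q: "r q \<noteq> 0"
  shows "Fw G K T x0 f q = Fw G K T x0 f p"
proof -
  have ends: "fst q = fst p" "pend G q = pend G p" using minrel_ends[OF m p q] by auto
  have rK: "r \<in> K" using m by (simp add: minimal_relation_def)
  have pp: "is_path G p" "is_path G q" using kQ_path[OF K_kQ[OF rK]] p q by auto
  have v: "fst p \<in> verts G" "pend G p \<in> verts G" using path_ends[OF pp(1)] by auto
  have r0: "walk_rel G K (path_walk p) (path_walk q)" by (rule wr_minrel[OF m p q])
  have rg: "walk_rel G K (gam (fst p)) (gam (fst p))" using gam(4)[OF v(1)] by (rule wr_refl)
  have r1: "walk_rel G K (wcomp (path_walk p) (gam (fst p))) (wcomp (path_walk q) (gam (fst p)))"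
    by (rule wr_comp[OF rg r0]) (use gam(5)[OF v(1)] ends in \<open>simp_all add: path_walk_def\<close>)
  have rh: "walk_rel G K (winv G (gam (pend G p))) (winv G (gam (pend G p)))"
    using is_walk_winv[OF gam(4)[OF v(2)]] by (rule wr_refl)
  have e1: "wend G (wcomp (path_walk p) (gam (fst p))) = pend G p"
    using wcomp_walk[OF gam(4)[OF v(1)], of "path_walk p"] pp(1) gam(5)[OF v(1)]
    by (simp add: is_path_def path_walk_def pend_def)
  have e2: "wend G (wcomp (path_walk q) (gam (fst p))) = pend G p"
    using wcomp_walk[OF gam(4)[OF v(1)], of "path_walk q"] pp(2) gam(5)[OF v(1)] ends
    by (simp add: is_path_def path_walk_def pend_def)
  have fw: "fst (winv G (gam (pend G p))) = pend G p" using gam(5)[OF v(2)] by (simp add: winv_eq)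
  have "walk_rel G K (Wu G T x0 p) (Wu G T x0 q)"
    unfolding Wu_def ends by (rule wr_comp[OF r1 rh]) (simp_all add: e1 e2 fw)
  then show ?thesis unfolding Fw_def using wclass_eq by metis
qed

end



lemma finite_short_paths:
  assumes "fin_digraph G"
  shows "finite {p. is_path G p \<and> length (snd p) < N}"
proof -
  have fv: "finite (verts G)" and fa: "finite (arcs G)"
    using assms by (auto simp: fin_digraph_def fin_digraph_axioms_def)
  have "{p. is_path G p \<and> length (snd p) < N} \<subseteq> verts G \<times> {xs. set xs \<subseteq> arcs G \<and> length xs \<le> N}"
  proof
    fix p assume p: "p \<in> {p. is_path G p \<and> length (snd p) < N}"
    then have w: "walk_ok G (fst p) (tw (snd p))" by (simp add: is_path_iff)
    have "set (snd p) \<subseteq> arcs G"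
    proof
      fix a assume "a \<in> set (snd p)"
      then have "(a, True) \<in> set (tw (snd p))" by auto
      then show "a \<in> arcs G" using walk_ok_arcs[OF w] by fastforce
    qed
    then show "p \<in> verts G \<times> {xs. set xs \<subseteq> arcs G \<and> length xs \<le> N}"
      using p walk_ok_verts[OF w] by (cases p) auto
  qed
  moreover have "finite (verts G \<times> {xs. set xs \<subseteq> arcs G \<and> length xs \<le> N})"
    using fv fa by (simp add: finite_lists_length_le)
  ultimately show ?thesis by (rule finite_subset)
qed

context pres begin

abbreviation "Ph f \<equiv> Phi G K T x0 f"
abbreviation "F f \<equiv> Fw G K T x0 f"

lemma Phi_kQ: "c \<in> kQ G \<Longrightarrow> Ph f c \<in> kQ G"
  by (auto simp: kQ_def Phi_def)
lemma Phi_add: "Ph f (\<lambda>p. c p + d p) = (\<lambda>p. Ph f c p + Ph f d p)"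
  by (simp add: Phi_def ring_distribs)
lemma Phi_diff: "Ph f (\<lambda>p. c p - d p) = (\<lambda>p. Ph f c p - Ph f d p)"
  by (simp add: Phi_def ring_distribs)
lemma Phi_smult: "Ph f (kQ_smult a c) = kQ_smult a (Ph f c)"
  by (simp add: Phi_def kQ_smult_def ac_simps)
lemma Phi_pbasis: "Ph f (pbasis u) = kQ_smult (F f u) (pbasis u)"
  by (auto simp: Phi_def kQ_smult_def pbasis_def)
lemma Phi_arrow: "c \<in> arrow_ideal_pow G N \<Longrightarrow> Ph f c \<in> arrow_ideal_pow G N"
  by (auto simp: arrow_ideal_pow_def Phi_kQ) (auto simp: Phi_def)

lemma zero_K: "(\<lambda>p. 0) \<in> K" by (simp add: kernel_def kQ_zero rho_zero)

lemma adm_N: obtains N where "arrow_ideal_pow G N \<subseteq> K"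
  using adm unfolding admissible_def by blast

lemma Phi_K_fin:
  assumes f: "f \<in> hom (pi1 G K x0) kplus"
  shows "c \<in> K \<Longrightarrow> finite {p. c p \<noteq> 0} \<Longrightarrow> Ph f c \<in> K"
proof (induct "card {p. c p \<noteq> 0}" arbitrary: c rule: less_induct)
  case less
  show ?case
  proof (cases "\<exists>p. c p \<noteq> 0")
    case False
    then have "Ph f c = (\<lambda>p. 0)" by (auto simp: Phi_def)
    then show ?thesis using zero_K by simp
  next
    case True
    then obtain p0 where p0: "c p0 \<noteq> 0" by blast
    show ?thesis
    proof (cases "minimal_relation G K c")
      case True
      have "Ph f c = kQ_smult (F f p0) c"
      proof (rule ext)
        fix p show "Ph f c p = kQ_smult (F f p0) c p"
          using F_minrel[OF True p0, of p f] by (cases "c p = 0") (auto simp: Phi_def kQ_smult_def)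
      qed
      then show ?thesis using K_smult[OF less(2)] by simp
    next
      case False
      then obtain S where S: "S \<subset> {p. c p \<noteq> 0}" "S \<noteq> {}" "(\<lambda>p. if p \<in> S then c p else 0) \<in> K"
        using less(2) p0 unfolding minimal_relation_def by blast
      define c1 where "c1 = (\<lambda>p. if p \<in> S then c p else 0)"
      define c2 where "c2 = (\<lambda>p. c p - c1 p)"
      have c1K: "c1 \<in> K" using S c1_def by simp
      have c2K: "c2 \<in> K" unfolding c2_def by (rule K_diff[OF less(2) c1K])
      have s1: "{p. c1 p \<noteq> 0} = S" using S(1) by (auto simp: c1_def)
      have s2: "{p. c2 p \<noteq> 0} = {p. c p \<noteq> 0} - S" using S(1) by (auto simp: c2_def c1_def)
      have fS: "finite S" using finite_subset[OF psubset_imp_subset[OF S(1)] less(3)] .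
      have cS: "card S < card {p. c p \<noteq> 0}" using less(3) S(1) by (rule psubset_card_mono)
      then have i1: "Ph f c1 \<in> K" using less(1)[of c1] c1K s1 fS by simp
      have cD: "card ({p. c p \<noteq> 0} - S) = card {p. c p \<noteq> 0} - card S"
        by (rule card_Diff_subset[OF fS psubset_imp_subset[OF S(1)]])
      have "card S > 0" using fS S(2) by (simp add: card_gt_0_iff)
      then have "card ({p. c p \<noteq> 0} - S) < card {p. c p \<noteq> 0}" using cD cS by linarith
      then have i2: "Ph f c2 \<in> K" using less(1)[of c2] c2K s2 less(3) by simp
      have "c = (\<lambda>p. c1 p + c2 p)" by (simp add: c2_def)
      then have "Ph f c = (\<lambda>p. Ph f c1 p + Ph f c2 p)" using Phi_add by metis
      then show ?thesis using K_add[OF i1 i2] by simp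
    qed
  qed
qed


lemma split_hi_lo:
  assumes c: "c \<in> kQ G" and N: "arrow_ideal_pow G N \<subseteq> K"
  defines "lo \<equiv> (\<lambda>p. if length (snd p) < N then c p else 0)"
    and "hi \<equiv> (\<lambda>p. if length (snd p) < N then 0 else c p)"
  shows "c = (\<lambda>p. lo p + hi p)" "hi \<in> arrow_ideal_pow G N" "hi \<in> K" "lo \<in> kQ G"
    "finite {p. lo p \<noteq> 0}"
proof -
  show "c = (\<lambda>p. lo p + hi p)" unfolding lo_def hi_def by (intro ext) simp
  have hk: "hi \<in> kQ G" unfolding kQ_def hi_def using kQ_path[OF c] by auto
  show hA: "hi \<in> arrow_ideal_pow G N" unfolding arrow_ideal_pow_def using hk
    by (auto simp: hi_def split: if_splits)
  then show "hi \<in> K" using N by blast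
  show "lo \<in> kQ G" unfolding lo_def by (rule kQ_restrict[OF c])
  have "{p. lo p \<noteq> 0} \<subseteq> {p. is_path G p \<and> length (snd p) < N}"
    using kQ_path[OF c] by (auto simp: lo_def split: if_splits)
  then show "finite {p. lo p \<noteq> 0}" by (rule finite_subset[OF _ finite_short_paths[OF fin]])
qed

lemma Phi_K:
  assumes f: "f \<in> hom (pi1 G K x0) kplus" and c: "c \<in> K"
  shows "Ph f c \<in> K"
proof -
  obtain N where N: "arrow_ideal_pow G N \<subseteq> K" by (rule adm_N)
  define lo where "lo = (\<lambda>p. if length (snd p) < N then c p else 0)"
  define hi where "hi = (\<lambda>p. if length (snd p) < N then 0 else c p)"
  note sp = split_hi_lo[OF K_kQ[OF c] N, folded lo_def hi_def]
  have c_eq: "c = (\<lambda>p. lo p + hi p)" unfolding lo_def hi_def by (intro ext) simp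
  have "lo = (\<lambda>p. c p - hi p)" unfolding lo_def hi_def by (intro ext) simp
  then have loK: "lo \<in> K" using K_diff[OF c sp(3)] by simp
  have flo: "finite {p. lo p \<noteq> 0}" using sp(5) by (simp add: lo_def)
  have i1: "Ph f lo \<in> K" by (rule Phi_K_fin[OF f loK flo])
  have i2: "Ph f hi \<in> K" using Phi_arrow[OF sp(2)] N by blast
  have "Ph f c = Ph f (\<lambda>p. lo p + hi p)" using c_eq by (rule arg_cong)
  also have "\<dots> = (\<lambda>p. Ph f lo p + Ph f hi p)" by (rule Phi_add)
  finally have "Ph f c = (\<lambda>p. Ph f lo p + Ph f hi p)" .
  then show ?thesis using K_add[OF i1 i2] by simp
qed

abbreviation "D f \<equiv> Dm G T x0 \<rho> f"

lemma rho_pre: "\<exists>c. c \<in> kQ G \<and> \<rho> c = a"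
  using surj by (metis UNIV_I imageE)

lemma D_eq:
  assumes f: "f \<in> hom (pi1 G K x0) kplus" and c: "c \<in> kQ G"
  shows "D f (\<rho> c) = \<rho> (Ph f c)"
proof -
  define c' where "c' = (SOME c'. c' \<in> kQ G \<and> \<rho> c' = \<rho> c)"
  have c': "c' \<in> kQ G" "\<rho> c' = \<rho> c" unfolding c'_def using someI[of "\<lambda>c'. c' \<in> kQ G \<and> \<rho> c' = \<rho> c" c] c by auto
  have "(\<lambda>p. c' p - c p) \<in> K" by (rule K_diff'[OF c'(1) c c'(2)])
  then have "Ph f (\<lambda>p. c' p - c p) \<in> K" by (rule Phi_K[OF f])
  then have "\<rho> (\<lambda>p. Ph f c' p - Ph f c p) = 0" unfolding Phi_diff by (simp add: kernel_def)
  then have "\<rho> (Ph f c') = \<rho> (Ph f c)" using rho_diff[OF Phi_kQ[OF c'(1)] Phi_kQ[OF c]] by simp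
  then show ?thesis unfolding Dm_def c'_def by simp
qed

lemma D_linear:
  assumes f: "f \<in> hom (pi1 G K x0) kplus"
  shows "k_linear scale (D f)"
  unfolding k_linear_def
proof (intro conjI allI)
  fix x y :: 'a
  obtain c where c: "c \<in> kQ G" "\<rho> c = x" using rho_pre by blast
  obtain d where d: "d \<in> kQ G" "\<rho> d = y" using rho_pre by blast
  have "x + y = \<rho> (\<lambda>p. c p + d p)" using rho_add[OF c(1) d(1)] c d by simp
  then have "D f (x + y) = \<rho> (Ph f (\<lambda>p. c p + d p))" using D_eq[OF f kQ_add[OF c(1) d(1)]] by simp
  also have "\<dots> = \<rho> (\<lambda>p. Ph f c p + Ph f d p)" by (simp only: Phi_add)
  also have "\<dots> = \<rho> (Ph f c) + \<rho> (Ph f d)" by (rule rho_add[OF Phi_kQ[OF c(1)] Phi_kQ[OF d(1)]])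
  also have "\<dots> = D f x + D f y" using D_eq[OF f c(1)] D_eq[OF f d(1)] c d by simp
  finally show "D f (x + y) = D f x + D f y" .
next
  fix a and x :: 'a
  obtain c where c: "c \<in> kQ G" "\<rho> c = x" using rho_pre by blast
  have "scale a x = \<rho> (kQ_smult a c)" using rho_smult[OF c(1)] c by simp
  then have "D f (scale a x) = \<rho> (Ph f (kQ_smult a c))" using D_eq[OF f kQ_smult[OF c(1)]] by simp
  also have "\<dots> = \<rho> (kQ_smult a (Ph f c))" by (simp only: Phi_smult)
  also have "\<dots> = scale a (\<rho> (Ph f c))" by (rule rho_smult[OF Phi_kQ[OF c(1)]])
  also have "\<dots> = scale a (D f x)" using D_eq[OF f c(1)] c by simp
  finally show "D f (scale a x) = scale a (D f x)" .
qed

lemma Phi_mult: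
  assumes f: "f \<in> hom (pi1 G K x0) kplus" and c: "c \<in> kQ G" and d: "d \<in> kQ G"
  shows "Ph f (kQ_mult G c d) = (\<lambda>p. kQ_mult G (Ph f c) d p + kQ_mult G c (Ph f d) p)"
proof (rule ext)
  fix p :: "('v,'e) path"
  let ?p1 = "\<lambda>j. (fst p, take j (snd p))"
  let ?p2 = "\<lambda>j. (pend G (fst p, take j (snd p)), drop j (snd p))"
  have t: "F f p * (c (?p2 j) * d (?p1 j)) = (F f (?p2 j) * c (?p2 j)) * d (?p1 j) + c (?p2 j) * (F f (?p1 j) * d (?p1 j))" for j
  proof (cases "c (?p2 j) = 0 \<or> d (?p1 j) = 0")
    case True then show ?thesis by auto
  next
    case False
    then have pp: "is_path G (?p1 j)" "is_path G (?p2 j)" using kQ_path c d by blast+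
    have "p = pcomp (?p2 j) (?p1 j)" by (simp add: pcomp_def)
    then have "F f p = F f (?p2 j) + F f (?p1 j)" using F_comp[OF f pp(1) pp(2)] by simp
    then show ?thesis by (simp add: algebra_simps)
  qed
  show "Ph f (kQ_mult G c d) p = kQ_mult G (Ph f c) d p + kQ_mult G c (Ph f d) p"
    unfolding Phi_def kQ_mult_def sum_distrib_left sum.distrib[symmetric] using t by simp
qed

lemma D_der:
  assumes f: "f \<in> hom (pi1 G K x0) kplus"
  shows "D f (x * y) = D f x * y + x * D f y"
proof -
  obtain c where c: "c \<in> kQ G" "\<rho> c = x" using rho_pre by blast
  obtain d where d: "d \<in> kQ G" "\<rho> d = y" using rho_pre by blast
  have xy: "x * y = \<rho> (kQ_mult G c d)" using rho_mult[OF c(1) d(1)] c d by simp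
  have "D f (x * y) = \<rho> (Ph f (kQ_mult G c d))" unfolding xy by (rule D_eq[OF f kQ_mult_kQ[OF c(1) d(1)]])
  also have "\<dots> = \<rho> (kQ_mult G (Ph f c) d) + \<rho> (kQ_mult G c (Ph f d))"
    unfolding Phi_mult[OF f c(1) d(1)]
    by (rule rho_add[OF kQ_mult_kQ[OF Phi_kQ[OF c(1)] d(1)] kQ_mult_kQ[OF c(1) Phi_kQ[OF d(1)]]])
  also have "\<dots> = D f x * y + x * D f y"
    using rho_mult[OF Phi_kQ[OF c(1)] d(1)] rho_mult[OF c(1) Phi_kQ[OF d(1)]] D_eq[OF f c(1)] D_eq[OF f d(1)] c d
    by simp
  finally show ?thesis .
qed

lemma D_basis:
  assumes f: "f \<in> hom (pi1 G K x0) kplus" and u: "is_path G u"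
  shows "D f (\<rho> (pbasis u)) = scale (F f u) (\<rho> (pbasis u))"
  using D_eq[OF f pbasis_kQ[OF u]] rho_smult[OF pbasis_kQ[OF u]] by (simp only: Phi_pbasis)

lemma D_Der0:
  assumes f: "f \<in> hom (pi1 G K x0) kplus"
  shows "D f \<in> Der0 G scale eA"
  unfolding Der0_def
proof (intro CollectI conjI allI ballI)
  show "k_linear scale (D f)" by (rule D_linear[OF f])
  fix x y show "D f (x * y) = D f x * y + x * D f y" by (rule D_der[OF f])
next
  fix i assume i: "i \<in> verts G"
  have p: "is_path G (i, [])" using i by (simp add: is_path_iff)
  show "D f (eA i) = 0" using D_basis[OF f p] F_triv[OF f i] idem i scale_zero_left[OF kalg] by simp
qed

lemma linear_zero: "k_linear scale d \<Longrightarrow> d 0 = 0"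
  unfolding k_linear_def by (metis add_cancel_right_right add_0)

lemma lin_unique:
  assumes l1: "k_linear scale d1" and l2: "k_linear scale d2"
    and eq: "\<forall>u. is_path G u \<longrightarrow> d1 (\<rho> (pbasis u)) = d2 (\<rho> (pbasis u))"
  shows "d1 = d2"
proof -
  have fin: "finite S \<Longrightarrow> \<forall>c::('v,'e) path \<Rightarrow> 'k. c \<in> kQ G \<longrightarrow> {p. c p \<noteq> 0} \<subseteq> S \<longrightarrow> d1 (\<rho> c) = d2 (\<rho> c)" for S :: "('v,'e) path set"
  proof (induct S rule: finite_induct)
    case empty
    show ?case
    proof (intro allI impI)
      fix c :: "('v,'e) path \<Rightarrow> 'k" assume "c \<in> kQ G" "{p. c p \<noteq> 0} \<subseteq> {}"
      then have "c = (\<lambda>p. 0)" by auto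
      then show "d1 (\<rho> c) = d2 (\<rho> c)" using rho_zero linear_zero[OF l1] linear_zero[OF l2] by simp
    qed
  next
    case (insert q S)
    show ?case
    proof (intro allI impI)
      fix c :: "('v,'e) path \<Rightarrow> 'k" assume c: "c \<in> kQ G" "{p. c p \<noteq> 0} \<subseteq> insert q S"
      show "d1 (\<rho> c) = d2 (\<rho> c)"
      proof (cases "c q = 0")
        case True
        then have "{p. c p \<noteq> 0} \<subseteq> S" using c(2) by auto
        then show ?thesis using insert(3) c(1) by blast
      next
        case False
        then have q: "is_path G q" using kQ_path[OF c(1)] by blast
        define c' where "c' = (\<lambda>p. if p = q then 0 else c p)"
        have c'k: "c' \<in> kQ G" unfolding c'_def kQ_def using kQ_path[OF c(1)] by auto
        have "{p. c' p \<noteq> 0} \<subseteq> S" using c(2) by (auto simp: c'_def)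
        then have h: "d1 (\<rho> c') = d2 (\<rho> c')" using insert(3) c'k by blast
        have "c = (\<lambda>p. c' p + kQ_smult (c q) (pbasis q) p)"
          by (auto simp: c'_def kQ_smult_def pbasis_def)
        then have "\<rho> c = \<rho> (\<lambda>p. c' p + kQ_smult (c q) (pbasis q) p)" by (rule arg_cong)
        also have "\<dots> = \<rho> c' + scale (c q) (\<rho> (pbasis q))"
          using rho_add[OF c'k kQ_smult[OF pbasis_kQ[OF q]]] rho_smult[OF pbasis_kQ[OF q]] by simp
        finally have "\<rho> c = \<rho> c' + scale (c q) (\<rho> (pbasis q))" .
        moreover have "d1 (\<rho> (pbasis q)) = d2 (\<rho> (pbasis q))" using eq q by blast
        ultimately show ?thesis using h l1 l2 unfolding k_linear_def by simp
      qed
    qed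
  qed
  show ?thesis
  proof (rule ext)
    fix a
    obtain c where c: "c \<in> kQ G" "\<rho> c = a" using rho_pre by blast
    obtain N where N: "arrow_ideal_pow G N \<subseteq> K" by (rule adm_N)
    define lo where "lo = (\<lambda>p. if length (snd p) < N then c p else 0)"
    define hi where "hi = (\<lambda>p. if length (snd p) < N then 0 else c p)"
    note sp = split_hi_lo[OF c(1) N, folded lo_def hi_def]
    have c_eq: "c = (\<lambda>p. lo p + hi p)" unfolding lo_def hi_def by (intro ext) simp
    have "\<rho> c = \<rho> (\<lambda>p. lo p + hi p)" using c_eq by (rule arg_cong)
    then have "\<rho> c = \<rho> lo + \<rho> hi" using rho_add[OF sp(4) K_kQ[OF sp(3)]] by simp
    then have "a = \<rho> lo" using sp(3) c by (simp add: kernel_def)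
    have flo: "finite {p. lo p \<noteq> 0}" using sp(5) by (simp add: lo_def)
    have "lo \<in> kQ G" using sp(4) by (simp add: lo_def)
    then show "d1 a = d2 a" using fin[OF flo] \<open>a = \<rho> lo\<close> by blast
  qed
qed

lemma tilde_eq:
  assumes f: "f \<in> hom (pi1 G K x0) kplus"
  shows "tilde G scale T x0 \<rho> f = D f"
  unfolding tilde_def
proof (rule the_equality)
  show "k_linear scale (D f) \<and> (\<forall>u. is_path G u \<longrightarrow> D f (\<rho> (pbasis u)) =
      scale (f (wclass G K (wcomp (winv G (tree_walk G T x0 (pend G u)))
          (wcomp (path_walk u) (tree_walk G T x0 (fst u)))))) (\<rho> (pbasis u)))"
    using D_linear[OF f] D_basis[OF f] unfolding Fw_def Wu_def by blast
next
  fix d assume d: "k_linear scale d \<and> (\<forall>u. is_path G u \<longrightarrow> d (\<rho> (pbasis u)) =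
      scale (f (wclass G K (wcomp (winv G (tree_walk G T x0 (pend G u)))
          (wcomp (path_walk u) (tree_walk G T x0 (fst u)))))) (\<rho> (pbasis u)))"
  show "d = D f"
    by (rule lin_unique) (use d D_linear[OF f] D_basis[OF f] in \<open>auto simp: Fw_def Wu_def\<close>)
qed

end



lemma Espan_I: "(\<Sum>i\<in>verts G. scale (c i) (eA i)) \<in> Espan G scale eA"
  unfolding Espan_def by blast

lemma Espan_diff:
  assumes k: "k_algebra scale" and "x \<in> Espan G scale eA" "y \<in> Espan G scale eA"
  shows "x - y \<in> Espan G scale eA"
proof -
  obtain c where c: "x = (\<Sum>i\<in>verts G. scale (c i) (eA i))" using assms(2) unfolding Espan_def by blast
  obtain d where d: "y = (\<Sum>i\<in>verts G. scale (d i) (eA i))" using assms(3) unfolding Espan_def by blast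
  have sd: "scale (a - b) z = scale a z - scale b z" for a b z
    using k_algebra_facts(2)[OF k, of a "- b" z] scale_minus[OF k, of b z] by simp
  have "x - y = (\<Sum>i\<in>verts G. scale (c i - d i) (eA i))"
    unfolding c d sd by (simp add: sum_subtractf)
  then show ?thesis using Espan_I[where c="\<lambda>i. c i - d i" and G=G and scale=scale and eA=eA] by simp
qed

lemma Espan_zero: "0 \<in> Espan G scale eA" if k: "k_algebra scale"
proof -
  have "(\<Sum>i\<in>verts G. scale 0 (eA i)) = 0" using scale_zero_left[OF k] by simp
  then show ?thesis using Espan_I[where c="\<lambda>i. 0" and G=G and scale=scale and eA=eA] by simp
qed

lemma Int0_diff:
  assumes k: "k_algebra scale" and u: "u \<in> Int0 G scale eA" and v: "v \<in> Int0 G scale eA"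
  shows "(\<lambda>a. u a - v a) \<in> Int0 G scale eA"
proof -
  obtain e1 where e1: "u = (\<lambda>a. e1 * a - a * e1)" "e1 \<in> Espan G scale eA" using u unfolding Int0_def by blast
  obtain e2 where e2: "v = (\<lambda>a. e2 * a - a * e2)" "e2 \<in> Espan G scale eA" using v unfolding Int0_def by blast
  have "(\<lambda>a. u a - v a) = (\<lambda>a. (e1 - e2) * a - a * (e1 - e2))"
    unfolding e1 e2 by (simp add: algebra_simps)
  then show ?thesis using Espan_diff[OF k e1(2) e2(2)] unfolding Int0_def by blast
qed

lemma Int0_zero: "k_algebra scale \<Longrightarrow> (\<lambda>a. 0) \<in> Int0 G scale eA"
  unfolding Int0_def using Espan_zero[of scale G eA] by force

lemma hh_class_cong:
  assumes k: "k_algebra scale" and gh: "(\<lambda>a. g a - h a) \<in> Int0 G scale eA"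
  shows "hh_class G scale eA g = hh_class G scale eA h"
proof -
  have hg: "(\<lambda>a. h a - g a) \<in> Int0 G scale eA"
    using Int0_diff[OF k Int0_zero[OF k] gh] by simp
  show ?thesis unfolding hh_class_def
  proof (intro Collect_cong conj_cong refl iffI)
    fix d' assume "(\<lambda>a. d' a - g a) \<in> Int0 G scale eA"
    from Int0_diff[OF k this hg] show "(\<lambda>a. d' a - h a) \<in> Int0 G scale eA" by (simp add: algebra_simps)
  next
    fix d' assume "(\<lambda>a. d' a - h a) \<in> Int0 G scale eA"
    from Int0_diff[OF k this gh] show "(\<lambda>a. d' a - g a) \<in> Int0 G scale eA" by (simp add: algebra_simps)
  qed
qed

theorem proposition3p3:
  fixes G :: "('v,'e) pre_digraph"
    and scale :: "'k::field \<Rightarrow> 'a::ring_1 \<Rightarrow> 'a"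
    and eA :: "'v \<Rightarrow> 'a"
    and \<nu> :: "(('v,'e) path \<Rightarrow> 'k) \<Rightarrow> 'a"
    and \<psi> :: "(('v,'e) path \<Rightarrow> 'k) \<Rightarrow> (('v,'e) path \<Rightarrow> 'k)"
    and \<psi>bar :: "'a \<Rightarrow> 'a"
    and T :: "'e set" and x0 :: 'v
  assumes "alg_closed TYPE('k)"
    and "fin_digraph G" and "quiver_connected G" and "no_oriented_cycles G"
    and "k_algebra scale" and "complete_idempotents G eA"
    and "presentation G scale eA \<nu>"
    and "kQ_alg_aut G \<psi>"
    and "\<forall>i\<in>verts G. \<psi> (pbasis (i, [])) = pbasis (i, [])"
    and "\<psi> ` kernel G \<nu> = kernel G \<nu>"
    and "alg_aut scale \<psi>bar"
    and "\<forall>c\<in>kQ G. \<psi>bar ((\<nu> \<circ> \<psi>) c) = (\<nu> \<circ> \<psi>) (\<psi> c)"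
    and "maximal_tree G T" and "x0 \<in> verts G"
  shows "(\<forall>f\<in>hom (pi1 G (kernel G \<nu>) x0) kplus.
            theta G scale eA T x0 (\<nu> \<circ> \<psi>) f
              = induced G scale eA \<psi>bar (theta G scale eA T x0 \<nu> f))
       \<and> theta G scale eA T x0 (\<nu> \<circ> \<psi>) ` hom (pi1 G (kernel G \<nu>) x0) kplus
          = induced G scale eA \<psi>bar ` (theta G scale eA T x0 \<nu> ` hom (pi1 G (kernel G \<nu>) x0) kplus)"
proof -
  note A = assms
  have k: "k_algebra scale" using assms(5) .
  have hom_nu: "kQ_alg_hom G scale \<nu>" and surj_nu: "\<nu> ` kQ G = UNIV"
    and adm_nu: "admissible G (kernel G \<nu>)" and idem_nu: "\<forall>i\<in>verts G. \<nu> (pbasis (i, [])) = eA i"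
    using assms(7) unfolding presentation_def by blast+
  have bij: "bij_betw \<psi> (kQ G) (kQ G)" using assms(8) unfolding kQ_alg_aut_def by blast
  have psi_add: "\<And>c d. c \<in> kQ G \<Longrightarrow> d \<in> kQ G \<Longrightarrow> \<psi> (\<lambda>p. c p + d p) = (\<lambda>p. \<psi> c p + \<psi> d p)"
    and psi_mult: "\<And>c d. c \<in> kQ G \<Longrightarrow> d \<in> kQ G \<Longrightarrow> \<psi> (kQ_mult G c d) = kQ_mult G (\<psi> c) (\<psi> d)"
    and psi_smult: "\<And>a c. c \<in> kQ G \<Longrightarrow> \<psi> (kQ_smult a c) = kQ_smult a (\<psi> c)"
    and psi_one: "\<psi> (kQ_one G) = kQ_one G"
    using assms(8) unfolding kQ_alg_aut_def by blast+
  have psi_kQ: "\<And>c. c \<in> kQ G \<Longrightarrow> \<psi> c \<in> kQ G" using bij unfolding bij_betw_def by blast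
  have psi_img: "\<psi> ` kQ G = kQ G" using bij by (simp add: bij_betw_def)
  have psi_inj: "inj_on \<psi> (kQ G)" using bij by (simp add: bij_betw_def)
  have one_kQ: "kQ_one G \<in> kQ G" by (auto simp: kQ_def kQ_one_def is_path_iff split: if_splits)
  have nu_add: "\<And>c d. c \<in> kQ G \<Longrightarrow> d \<in> kQ G \<Longrightarrow> \<nu> (\<lambda>p. c p + d p) = \<nu> c + \<nu> d"
    and nu_mult: "\<And>c d. c \<in> kQ G \<Longrightarrow> d \<in> kQ G \<Longrightarrow> \<nu> (kQ_mult G c d) = \<nu> c * \<nu> d"
    and nu_smult: "\<And>a c. c \<in> kQ G \<Longrightarrow> \<nu> (kQ_smult a c) = scale a (\<nu> c)"
    and nu_one: "\<nu> (kQ_one G) = 1"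
    using hom_nu unfolding kQ_alg_hom_def by blast+
  have hom_mu: "kQ_alg_hom G scale (\<nu> \<circ> \<psi>)"
    unfolding kQ_alg_hom_def
    using nu_add nu_mult nu_smult nu_one psi_add psi_mult psi_smult psi_one psi_kQ
    by (simp add: kQ_add kQ_mult_kQ kQ_smult)
  have "(\<nu> \<circ> \<psi>) ` kQ G = \<nu> ` (\<psi> ` kQ G)" by (rule image_comp[symmetric])
  then have surj_mu: "(\<nu> \<circ> \<psi>) ` kQ G = UNIV" using surj_nu psi_img by simp
  have ker: "kernel G (\<nu> \<circ> \<psi>) = kernel G \<nu>"
  proof (intro equalityI subsetI)
    fix c assume c: "c \<in> kernel G (\<nu> \<circ> \<psi>)"
    then have "\<psi> c \<in> kernel G \<nu>" using psi_kQ by (simp add: kernel_def)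
    then have "\<psi> c \<in> \<psi> ` kernel G \<nu>" using assms(10) by simp
    then obtain c' where c': "c' \<in> kernel G \<nu>" "\<psi> c = \<psi> c'" by blast
    have "c = c'" using psi_inj c c' unfolding inj_on_def kernel_def by blast
    then show "c \<in> kernel G \<nu>" using c' by simp
  next
    fix c assume c: "c \<in> kernel G \<nu>"
    then have "\<psi> c \<in> kernel G \<nu>" using assms(10) by blast
    then show "c \<in> kernel G (\<nu> \<circ> \<psi>)" using c by (simp add: kernel_def)
  qed
  have adm_mu: "admissible G (kernel G (\<nu> \<circ> \<psi>))" using adm_nu ker by simp
  have idem_mu: "\<forall>i\<in>verts G. (\<nu> \<circ> \<psi>) (pbasis (i, [])) = eA i" using idem_nu assms(9) by simp
  interpret N: pres G scale eA \<nu> T x0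
    using assms(2,3,13,14) k hom_nu surj_nu adm_nu idem_nu by (simp add: pres_def)
  interpret M: pres G scale eA "\<nu> \<circ> \<psi>" T x0
    using assms(2,3,13,14) k hom_mu surj_mu adm_mu idem_mu by (simp add: pres_def)
  have bar_aut: "bij \<psi>bar" "\<And>x y. \<psi>bar (x + y) = \<psi>bar x + \<psi>bar y" "\<And>x y. \<psi>bar (x * y) = \<psi>bar x * \<psi>bar y"
    "\<And>a x. \<psi>bar (scale a x) = scale a (\<psi>bar x)"
    using assms(11) unfolding alg_aut_def by blast+
  have bar_nu: "\<psi>bar (\<nu> c) = \<nu> (\<psi> c)" if c: "c \<in> kQ G" for c
  proof -
    obtain c0 where c0: "c0 \<in> kQ G" "c = \<psi> c0" using c psi_img by blast
    show ?thesis using assms(12) c0 by simp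
  qed
  have bar0: "\<psi>bar 0 = 0" using bar_aut(2)[of 0 0] by simp
  have bar_diff: "\<psi>bar (x - y) = \<psi>bar x - \<psi>bar y" for x y
    using bar_aut(2)[of "x - y" y] by (simp add: algebra_simps)
  have bar_e: "\<psi>bar (eA i) = eA i" if i: "i \<in> verts G" for i
  proof -
    have p: "is_path G (i, [])" using i by (simp add: is_path_iff)
    show ?thesis using bar_nu[OF pbasis_kQ[OF p]] idem_nu assms(9) i by simp
  qed
  have bar_Espan: "\<psi>bar e \<in> Espan G scale eA" if e: "e \<in> Espan G scale eA" for e
  proof -
    obtain c where c: "e = (\<Sum>i\<in>verts G. scale (c i) (eA i))" using e unfolding Espan_def by blast
    have "\<psi>bar e = (\<Sum>i\<in>verts G. (\<psi>bar \<circ> (\<lambda>i. scale (c i) (eA i))) i)"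
      unfolding c by (rule sum_comp_morphism[symmetric, OF bar0 bar_aut(2)])
    also have "\<dots> = (\<Sum>i\<in>verts G. scale (c i) (eA i))"
      using bar_e by (simp add: bar_aut(4))
    finally show ?thesis unfolding Espan_def by blast
  qed
  have inv_bar: "\<psi>bar (inv_into UNIV \<psi>bar a) = a" for a
    using bar_aut(1) by (simp add: bij_def surj_f_inv_f)
  have hom_eq: "hom (pi1 G (kernel G (\<nu> \<circ> \<psi>)) x0) (kplus :: 'k monoid) = hom (pi1 G (kernel G \<nu>) x0) kplus"
    using ker by simp
  have Phi_eq: "Phi G (kernel G (\<nu> \<circ> \<psi>)) T x0 f = Phi G (kernel G \<nu>) T x0 f" for f
    using ker by simp
  have conj: "Dm G T x0 (\<nu> \<circ> \<psi>) f = \<psi>bar \<circ> Dm G T x0 \<nu> f \<circ> inv_into UNIV \<psi>bar"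
    if f: "f \<in> hom (pi1 G (kernel G \<nu>) x0) kplus" for f
  proof (rule ext)
    fix a
    have f': "f \<in> hom (pi1 G (kernel G (\<nu> \<circ> \<psi>)) x0) kplus" using f hom_eq by simp
    obtain c where c: "c \<in> kQ G" "\<nu> c = inv_into UNIV \<psi>bar a" using N.rho_pre by blast
    have a: "a = (\<nu> \<circ> \<psi>) c" using inv_bar[of a] c bar_nu[OF c(1)] by simp
    have "Dm G T x0 (\<nu> \<circ> \<psi>) f a = (\<nu> \<circ> \<psi>) (Phi G (kernel G \<nu>) T x0 f c)"
      unfolding a using M.D_eq[OF f' c(1)] Phi_eq by simp
    also have "\<dots> = \<psi>bar (\<nu> (Phi G (kernel G \<nu>) T x0 f c))"
      using bar_nu[OF N.Phi_kQ[OF c(1)]] by simp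
    also have "\<dots> = \<psi>bar (Dm G T x0 \<nu> f (\<nu> c))" using N.D_eq[OF f c(1)] by simp
    finally show "Dm G T x0 (\<nu> \<circ> \<psi>) f a = (\<psi>bar \<circ> Dm G T x0 \<nu> f \<circ> inv_into UNIV \<psi>bar) a"
      using c by simp
  qed
  have main: "theta G scale eA T x0 (\<nu> \<circ> \<psi>) f = induced G scale eA \<psi>bar (theta G scale eA T x0 \<nu> f)"
    if f: "f \<in> hom (pi1 G (kernel G \<nu>) x0) kplus" for f
  proof -
    have f': "f \<in> hom (pi1 G (kernel G (\<nu> \<circ> \<psi>)) x0) kplus" using f hom_eq by simp
    have t1: "theta G scale eA T x0 (\<nu> \<circ> \<psi>) f = hh_class G scale eA (Dm G T x0 (\<nu> \<circ> \<psi>) f)"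
      unfolding theta_def using M.tilde_eq[OF f'] by simp
    have t2: "theta G scale eA T x0 \<nu> f = hh_class G scale eA (Dm G T x0 \<nu> f)"
      unfolding theta_def using N.tilde_eq[OF f] by simp
    let ?D = "Dm G T x0 \<nu> f"
    let ?X = "hh_class G scale eA ?D"
    have DX: "?D \<in> ?X" unfolding hh_class_def using N.D_Der0[OF f] Int0_zero[OF k] by simp
    define d where "d = (SOME d. d \<in> ?X)"
    have dX: "d \<in> ?X" unfolding d_def by (rule someI[of "\<lambda>d. d \<in> ?X", OF DX])
    then obtain e where e: "e \<in> Espan G scale eA" "(\<lambda>a. d a - ?D a) = (\<lambda>a. e * a - a * e)"
      unfolding hh_class_def Int0_def by blast
    have "(\<lambda>a. (\<psi>bar \<circ> d \<circ> inv_into UNIV \<psi>bar) a - Dm G T x0 (\<nu> \<circ> \<psi>) f a) = (\<lambda>a. \<psi>bar e * a - a * \<psi>bar e)"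
    proof (rule ext)
      fix a
      let ?b = "inv_into UNIV \<psi>bar a"
      have "(\<psi>bar \<circ> d \<circ> inv_into UNIV \<psi>bar) a - Dm G T x0 (\<nu> \<circ> \<psi>) f a = \<psi>bar (d ?b - ?D ?b)"
        unfolding conj[OF f] by (simp add: bar_diff)
      also have "\<dots> = \<psi>bar (e * ?b - ?b * e)" using fun_cong[OF e(2), of ?b] by simp
      also have "\<dots> = \<psi>bar e * a - a * \<psi>bar e" by (simp add: bar_diff bar_aut(3) inv_bar)
      finally show "(\<psi>bar \<circ> d \<circ> inv_into UNIV \<psi>bar) a - Dm G T x0 (\<nu> \<circ> \<psi>) f a = \<psi>bar e * a - a * \<psi>bar e" .
    qed
    then have "(\<lambda>a. (\<psi>bar \<circ> d \<circ> inv_into UNIV \<psi>bar) a - Dm G T x0 (\<nu> \<circ> \<psi>) f a) \<in> Int0 G scale eA"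
      using bar_Espan[OF e(1)] unfolding Int0_def by blast
    then have "hh_class G scale eA (\<psi>bar \<circ> d \<circ> inv_into UNIV \<psi>bar) = hh_class G scale eA (Dm G T x0 (\<nu> \<circ> \<psi>) f)"
      by (rule hh_class_cong[OF k])
    then show ?thesis unfolding t1 t2 induced_def d_def by simp
  qed
  show ?thesis
  proof
    show "\<forall>f\<in>hom (pi1 G (kernel G \<nu>) x0) kplus. theta G scale eA T x0 (\<nu> \<circ> \<psi>) f = induced G scale eA \<psi>bar (theta G scale eA T x0 \<nu> f)"
      using main by blast
    have "theta G scale eA T x0 (\<nu> \<circ> \<psi>) ` hom (pi1 G (kernel G \<nu>) x0) kplus
        = (induced G scale eA \<psi>bar \<circ> theta G scale eA T x0 \<nu>) ` hom (pi1 G (kernel G \<nu>) x0) kplus"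
      using main by (intro image_cong) auto
    then show "theta G scale eA T x0 (\<nu> \<circ> \<psi>) ` hom (pi1 G (kernel G \<nu>) x0) kplus
        = induced G scale eA \<psi>bar ` (theta G scale eA T x0 \<nu> ` hom (pi1 G (kernel G \<nu>) x0) kplus)"
      by (simp add: image_comp)
  qed
qed

end
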